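(* In the synchronous unauthenticated setting with $n$ parties of which at most $t=\lfloor (n-1)/3\rfloor$ are Byzantine and a computationally unbounded adversary, the protocol "Synchronous Error-free $\frac{n}{3}$-BA" described in the context, run on $l$-bit inputs, satisfies Termination, Agreement and Validity of Byzantine agreement (with probability $1$), and has communication complexity $O(nl+n^3+n\mathcal{B}(1))$.
   Context: Model: $n$ parties connected pairwise by reliable authenticated (point-to-point) channels, synchronous; a static, computationally unbounded adversary corrupts up to $t$ parties (Byzantine). No cryptography is used. Communication complexity = worst-case total bits sent by honest parties. Byzantine agreement: each $P_i$ holds an $l$-bit input $m_i$; Termination: every honest party outputs; Agreement: honest outputs equal; Validity: if all honest inputs equal $m$, honest parties output $m$. A single-bit Byzantine broadcast oracle lets a sender broadcast one bit so that all honest parties deliver the same bit, equal to the sender's if the sender is honest; its cost is $\mathcal{B}(1)$. Reed–Solomon $(n,t+1)$ code: $\texttt{ENC}$ maps $t+1$ data symbols to $n$ codeword symbols, any $t+1$ of which determine the data; $\texttt{DEC}$ corrects $c$ errors and $d$ erasures iff $n-(t+1)\ge 2c+d$. $(n,t)$-star of an undirected graph $G$ on vertex set $\mathcal{P}=\{P_1,\dots,P_n\}$: a pair $(\mathcal{C},\mathcal{D})$ with $\mathcal{C}\subseteq\mathcal{D}\subseteq\mathcal{P}$, $|\mathcal{C}|\ge n-2t$, $|\mathcal{D}|\ge n-t$, and every $P_i\in\mathcal{C}$, $P_j\in\mathcal{D}$ adjacent. Procedure $\texttt{STAR}(G)$: let $H$ be the complement of $G$ with edge set $\bar E$; compute a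 maximum matching $M$ of $H$ by a fixed deterministic algorithm; $N$ = matched vertices, $\bar N=\mathcal{P}\setminus N$; $T=\{P_i\in\bar N:\exists (P_j,P_k)\in M,\ (P_i,P_j),(P_i,P_k)\in\bar E\}$; $\mathcal{C}=\bar N\setminus T$; $B=\{P_j\in N:\exists P_k\in\mathcal{C},\ (P_j,P_k)\in\bar E\}$; $\mathcal{D}=\mathcal{P}\setminus B$; output $(\mathcal{C},\mathcal{D})$ if $|\mathcal{C}|\ge n-2t$ and $|\mathcal{D}|\ge n-t$, else output noSTAR. Protocol for $P_i$: (1) Split $m_i$ into $t+1$ blocks of $l/(t+1)$ bits, compute $(s_{i1},\dots,s_{in})=\texttt{ENC}(\text{blocks})$; send $s_{ii}$ to every party and $s_{ij}$ to $P_j$ for each $j$. (2) Form a bit vector $v_i$ of length $n$ with $v_i[j]=1$ iff $s_{ij}=s_{jj}$ and $s_{ii}=s_{ji}$, where $s_{jj}$ and $s_{ji}$ are the values received from $P_j$ in step 1; send $v_i$ to every party. (3) Build graph $G_i$ on $\mathcal{P}$ with edge $(P_x,P_y)$ iff $v_x[y]=v_y[x]=1$ (using the vectors as received by $P_i$), and run $\texttt{STAR}(G_i)$. (4) If it returns $(\mathcal{C}_i,\mathcal{D}_i)$, let $\mathcal{F}_i$ be the set of parties with at least $t+1$ neighbours in $\mathcal{C}_i$ and $\mathcal{E}_i$ the set of parties with at least $2t+1$ neighbours in $\mathcal{F}_i$ (each party counted as its own neighbour); if $|\mathcal{F}_i|\ge 2t+1$ and $|\mathcal{E}_i|\ge 2t+1$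 keep $\mathcal{E}_i$, otherwise (or if noSTAR) set $\mathcal{E}_i=\emptyset$. (5) If $\mathcal{E}_i\ne\emptyset$, broadcast bit $1$ with the single-bit BB oracle and send $\mathcal{E}_i$ as an $n$-bit vector to every party; otherwise broadcast bit $0$. (6) If at least $2t+1$ of these broadcasts deliver $1$: let $\mathbf{E}$ be the sets $\mathcal{E}_x$ received; for each $\mathcal{E}_x\in\mathbf{E}$ let $maj_x$ be a value $v$ with $|\{j\in\mathcal{E}_x: s_{ji}=v\}|\ge\lceil(|\mathcal{E}_x|+1)/2\rceil$ ($s_{ji}$ = value received from $P_j$ in step 1), or $\bot$ if none; find $\mathbf{E}'\subseteq\mathbf{E}$ with $|\mathbf{E}'|\ge t+1$ whose $maj_x$ are all equal to a common value $maj\ne\bot$, and send $maj$ to every party. If fewer than $2t+1$ broadcasts deliver $1$, output a predefined $l$-bit message $m'$ and abort. (7) With $maj_j$ the value received from $P_j$ in step 6, apply $\texttt{DEC}$ to $(maj_1,\dots,maj_n)$ with $c=t$, $d=0$ and output the concatenation of the decoded blocks. *)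

theory Defs
  imports Main "HOL-Computational_Algebra.Primes"
begin

text \<open>Parties are P_0,...,P_(n-1), identified with the naturals below n.\<close>

definition tB :: "nat \<Rightarrow> nat" where
  "tB n = (n - 1) div 3"

text \<open>Block length: ceiling of l/(t+1) (the message is padded with zeros).\<close>
definition blk :: "nat \<Rightarrow> nat \<Rightarrow> nat" where
  "blk n l = (l + tB n) div (tB n + 1)"

text \<open>The Reed-Solomon code is over the prime field GF(p), p the least prime with
  n < p (so that 1..n are distinct evaluation points) and 2^blk <= p (so that a block fits).\<close>
definition prime_of :: "nat \<Rightarrow> nat \<Rightarrow> nat" where
  "prime_of n l = (LEAST p. prime p \<and> n < p \<and> 2 ^ blk n l \<le> p)"

text \<open>Number of bits needed to transmit one field symbol.\<close>
definition symbits :: "nat \<Rightarrow> nat" where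
  "symbits p = (LEAST k. p \<le> 2 ^ k)"

definition bits_to_nat :: "bool list \<Rightarrow> nat" where
  "bits_to_nat bs = foldr (\<lambda>b acc. (if b then 1 else 0) + 2 * acc) bs 0"

definition nat_to_bits :: "nat \<Rightarrow> nat \<Rightarrow> bool list" where
  "nat_to_bits w x = map (\<lambda>i. odd (x div 2 ^ i)) [0..<w]"

definition msg_blocks :: "nat \<Rightarrow> nat \<Rightarrow> bool list \<Rightarrow> nat list" where
  "msg_blocks n l msg =
     map (\<lambda>k. bits_to_nat (take (blk n l) (drop (k * blk n l) msg))) [0..<tB n + 1]"

definition unblocks :: "nat \<Rightarrow> nat \<Rightarrow> nat list \<Rightarrow> bool list" where
  "unblocks n l ds = take l (concat (map (nat_to_bits (blk n l)) ds))"

section \<open>Reed-Solomon (n, t+1) code over GF(p), evaluation points 1..n\<close>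

definition rs_enc :: "nat \<Rightarrow> nat list \<Rightarrow> nat \<Rightarrow> nat" where
  "rs_enc p ds j = (\<Sum>k<length ds. ds ! k * (j + 1) ^ k) mod p"

text \<open>Decoding with c = t errors and d = 0 erasures: a data word whose codeword differs
  from the received word in at most t positions.\<close>
definition rs_dec :: "nat \<Rightarrow> nat \<Rightarrow> nat \<Rightarrow> (nat \<Rightarrow> nat) \<Rightarrow> nat list" where
  "rs_dec n t p w = (SOME ds. length ds = t + 1 \<and> (\<forall>x\<in>set ds. x < p) \<and>
      card {j. j < n \<and> rs_enc p ds j \<noteq> w j} \<le> t)"

definition is_matching :: "nat \<Rightarrow> (nat \<Rightarrow> nat \<Rightarrow> bool) \<Rightarrow> (nat \<times> nat) set \<Rightarrow> bool" where
  "is_matching n H M \<longleftrightarrow>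
     (\<forall>(a, b)\<in>M. a < n \<and> b < n \<and> a \<noteq> b \<and> H a b) \<and>
     (\<forall>e\<in>M. \<forall>e'\<in>M. e \<noteq> e' \<longrightarrow> {fst e, snd e} \<inter> {fst e', snd e'} = {})"

definition is_max_matching :: "nat \<Rightarrow> (nat \<Rightarrow> nat \<Rightarrow> bool) \<Rightarrow> (nat \<times> nat) set \<Rightarrow> bool" where
  "is_max_matching n H M \<longleftrightarrow> is_matching n H M \<and> finite M \<and>
     (\<forall>M'. is_matching n H M' \<longrightarrow> card M' \<le> card M)"

definition matching_alg :: "(nat \<Rightarrow> (nat \<Rightarrow> nat \<Rightarrow> bool) \<Rightarrow> (nat \<times> nat) set) \<Rightarrow> bool" where
  "matching_alg alg \<longleftrightarrow> (\<forall>n H. is_max_matching n H (alg n H))"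

definition star :: "nat \<Rightarrow> nat \<Rightarrow> (nat \<Rightarrow> (nat \<Rightarrow> nat \<Rightarrow> bool) \<Rightarrow> (nat \<times> nat) set)
    \<Rightarrow> (nat \<Rightarrow> nat \<Rightarrow> bool) \<Rightarrow> (nat set \<times> nat set) option" where
  "star n t alg G =
    (let H = (\<lambda>x y. x < n \<and> y < n \<and> x \<noteq> y \<and> \<not> G x y);
         M = alg n H;
         N = {x. \<exists>(a, b)\<in>M. x = a \<or> x = b};
         Nb = {..<n} - N;
         T = {i\<in>Nb. \<exists>(j, k)\<in>M. H i j \<and> H i k};
         C = Nb - T;
         B = {j\<in>N. \<exists>k\<in>C. H j k};
         D = {..<n} - B
     in if n - 2 * t \<le> card C \<and> n - t \<le> card D then Some (C, D) else None)"

text \<open>Messages of the corrupt parties: (sender, recipient) indexed; all arbitrary.\<close>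
record adv =
  adv1 :: "nat \<Rightarrow> nat \<Rightarrow> nat \<times> nat"        (* step 1: (s_jj, s_ji) as received by i *)
  adv2 :: "nat \<Rightarrow> nat \<Rightarrow> nat \<Rightarrow> bool"      (* step 2: vector v_j as received by i *)
  advb :: "nat \<Rightarrow> bool"                    (* step 5: bit delivered by BB of corrupt sender *)
  adv5 :: "nat \<Rightarrow> nat \<Rightarrow> nat set"         (* step 5: set E_j as received by i *)
  adv6 :: "nat \<Rightarrow> nat \<Rightarrow> nat"             (* step 6: maj_j as received by i *)

type_synonym malg = "nat \<Rightarrow> (nat \<Rightarrow> nat \<Rightarrow> bool) \<Rightarrow> (nat \<times> nat) set"

text \<open>s_jk computed by an honest P_j.\<close>
definition share :: "nat \<Rightarrow> nat \<Rightarrow> (nat \<Rightarrow> bool list) \<Rightarrow> nat \<Rightarrow> nat \<Rightarrow> nat" where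
  "share n l m j k = rs_enc (prime_of n l) (msg_blocks n l (m j)) k"

definition recv1 :: "nat \<Rightarrow> nat \<Rightarrow> (nat \<Rightarrow> bool list) \<Rightarrow> nat set \<Rightarrow> adv \<Rightarrow> nat \<Rightarrow> nat \<Rightarrow> nat \<times> nat" where
  "recv1 n l m Cr A i j = (if j \<in> Cr then adv1 A j i else (share n l m j j, share n l m j i))"

definition vec :: "nat \<Rightarrow> nat \<Rightarrow> (nat \<Rightarrow> bool list) \<Rightarrow> nat set \<Rightarrow> adv \<Rightarrow> nat \<Rightarrow> nat \<Rightarrow> bool" where
  "vec n l m Cr A i j \<longleftrightarrow> share n l m i j = fst (recv1 n l m Cr A i j) \<and>
                           share n l m i i = snd (recv1 n l m Cr A i j)"

definition recv2 :: "nat \<Rightarrow> nat \<Rightarrow> (nat \<Rightarrow> bool list) \<Rightarrow> nat set \<Rightarrow> adv \<Rightarrow> nat \<Rightarrow> nat \<Rightarrow> nat \<Rightarrow> bool" where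
  "recv2 n l m Cr A i x = (if x \<in> Cr then adv2 A x i else vec n l m Cr A x)"

definition graph :: "nat \<Rightarrow> nat \<Rightarrow> (nat \<Rightarrow> bool list) \<Rightarrow> nat set \<Rightarrow> adv \<Rightarrow> nat \<Rightarrow> nat \<Rightarrow> nat \<Rightarrow> bool" where
  "graph n l m Cr A i x y \<longleftrightarrow> x < n \<and> y < n \<and> x \<noteq> y \<and>
      recv2 n l m Cr A i x y \<and> recv2 n l m Cr A i y x"

text \<open>The set E_i of an honest P_i (empty if noSTAR or the size checks fail);
  each party is counted as its own neighbour.\<close>
definition Eset :: "nat \<Rightarrow> nat \<Rightarrow> malg \<Rightarrow> (nat \<Rightarrow> bool list) \<Rightarrow> nat set \<Rightarrow> adv \<Rightarrow> nat \<Rightarrow> nat set" where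
  "Eset n l alg m Cr A i =
    (let t = tB n; G = graph n l m Cr A i in
     case star n t alg G of
       None \<Rightarrow> {}
     | Some (C, D) \<Rightarrow>
         (let F = {x. x < n \<and> t + 1 \<le> card {y\<in>C. y = x \<or> G x y}};
              E = {x. x < n \<and> 2 * t + 1 \<le> card {y\<in>F. y = x \<or> G x y}}
          in if 2 * t + 1 \<le> card F \<and> 2 * t + 1 \<le> card E then E else {}))"

text \<open>Bit delivered by the single-bit BB instance of sender x (same for all honest parties).\<close>
definition bcast :: "nat \<Rightarrow> nat \<Rightarrow> malg \<Rightarrow> (nat \<Rightarrow> bool list) \<Rightarrow> nat set \<Rightarrow> adv \<Rightarrow> nat \<Rightarrow> bool" where
  "bcast n l alg m Cr A x = (if x \<in> Cr then advb A x else Eset n l alg m Cr A x \<noteq> {})"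

definition proceed :: "nat \<Rightarrow> nat \<Rightarrow> malg \<Rightarrow> (nat \<Rightarrow> bool list) \<Rightarrow> nat set \<Rightarrow> adv \<Rightarrow> bool" where
  "proceed n l alg m Cr A \<longleftrightarrow> 2 * tB n + 1 \<le> card {x. x < n \<and> bcast n l alg m Cr A x}"

definition recvE :: "nat \<Rightarrow> nat \<Rightarrow> malg \<Rightarrow> (nat \<Rightarrow> bool list) \<Rightarrow> nat set \<Rightarrow> adv \<Rightarrow> nat \<Rightarrow> nat \<Rightarrow> nat set" where
  "recvE n l alg m Cr A i x = (if x \<in> Cr then adv5 A x i \<inter> {..<n} else Eset n l alg m Cr A x)"

text \<open>maj_x computed by P_i for a received set E (None = bottom).\<close>
definition majof :: "nat \<Rightarrow> nat \<Rightarrow> (nat \<Rightarrow> bool list) \<Rightarrow> nat set \<Rightarrow> adv \<Rightarrow> nat \<Rightarrow> nat set \<Rightarrow> nat option" where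
  "majof n l m Cr A i E =
    (if \<exists>v. (card E + 2) div 2 \<le> card {j\<in>E. snd (recv1 n l m Cr A i j) = v}
     then Some (SOME v. (card E + 2) div 2 \<le> card {j\<in>E. snd (recv1 n l m Cr A i j) = v})
     else None)"

definition majval :: "nat \<Rightarrow> nat \<Rightarrow> malg \<Rightarrow> (nat \<Rightarrow> bool list) \<Rightarrow> nat set \<Rightarrow> adv \<Rightarrow> nat \<Rightarrow> nat" where
  "majval n l alg m Cr A i =
    (SOME v. \<exists>E'. E' \<subseteq> {x. x < n \<and> bcast n l alg m Cr A x} \<and> tB n + 1 \<le> card E' \<and>
        (\<forall>x\<in>E'. majof n l m Cr A i (recvE n l alg m Cr A i x) = Some v))"

definition recv6 :: "nat \<Rightarrow> nat \<Rightarrow> malg \<Rightarrow> (nat \<Rightarrow> bool list) \<Rightarrow> nat set \<Rightarrow> adv \<Rightarrow> nat \<Rightarrow> nat \<Rightarrow> nat" where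
  "recv6 n l alg m Cr A i j = (if j \<in> Cr then adv6 A j i else majval n l alg m Cr A j)"

text \<open>Output of an honest P_i (m' is the predefined message output on abort).\<close>
definition party_output :: "nat \<Rightarrow> nat \<Rightarrow> malg \<Rightarrow> bool list \<Rightarrow> (nat \<Rightarrow> bool list) \<Rightarrow> nat set \<Rightarrow> adv \<Rightarrow> nat \<Rightarrow> bool list" where
  "party_output n l alg m' m Cr A i =
    (if proceed n l alg m Cr A
     then unblocks n l (rs_dec n (tB n) (prime_of n l) (recv6 n l alg m Cr A i))
     else m')"

text \<open>Total number of bits sent by honest parties (messages to other parties), plus the
  cost B1 of each of the n single-bit BB instances.\<close>
definition comm_cost :: "nat \<Rightarrow> nat \<Rightarrow> malg \<Rightarrow> (nat \<Rightarrow> bool list) \<Rightarrow> nat set \<Rightarrow> adv \<Rightarrow> nat \<Rightarrow> nat" where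
  "comm_cost n l alg m Cr A B1 =
    (let k = symbits (prime_of n l) in
     (\<Sum>i\<in>{..<n} - Cr.
        2 * k * (n - 1)
      + n * (n - 1)
      + (if Eset n l alg m Cr A i \<noteq> {} then n * (n - 1) else 0)
      + (if proceed n l alg m Cr A then k * (n - 1) else 0))
     + n * B1)"

end

theory Submission
  imports Defs "HOL-Computational_Algebra.Polynomial"
begin



lemma Suc_div_split: "(0::nat) < d \<Longrightarrow> Suc n div d = n div d + (if d dvd Suc n then 1 else 0)"
  by (auto simp: div_Suc dvd_eq_mod_eq_0)

lemma sum_ind: "finite S \<Longrightarrow> (\<Sum>i\<in>S. if P i then (1::nat) else 0) = card {i\<in>S. P i}"
proof (induction S rule: finite_induct)
  case (insert x F)
  have "{i \<in> insert x F. P i} = (if P x then insert x {i\<in>F. P i} else {i\<in>F. P i})" by auto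
  thus ?case using insert by auto
qed simp

lemma mult_le_self:
  fixes p x :: nat assumes "prime p" "x > 0" shows "multiplicity p x \<le> x"
proof -
  have "p ^ multiplicity p x dvd x" by (simp add: multiplicity_dvd)
  hence "p ^ multiplicity p x \<le> x" using assms by (simp add: dvd_imp_le)
  moreover have "multiplicity p x < 2 ^ multiplicity p x" by (rule less_exp)
  moreover have "2 ^ multiplicity p x \<le> p ^ multiplicity p x"
    using prime_ge_2_nat[OF assms(1)] by (simp add: power_mono)
  ultimately show ?thesis by linarith
qed

lemma mult_card:
  fixes p x :: nat assumes "prime p" "x > 0"
  shows "card {i\<in>{1..x}. p ^ i dvd x} = multiplicity p x"
proof -
  have "{i\<in>{1..x}. p ^ i dvd x} = {1..multiplicity p x}"
    using power_dvd_iff_le_multiplicity[of x p] assms mult_le_self[OF assms]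
    by (auto simp: prime_nat_iff)
  thus ?thesis by simp
qed

lemma pow_gt: fixes p :: nat assumes "prime p" shows "n < p ^ n"
proof -
  have "n < 2 ^ n" by (rule less_exp)
  also have "2 ^ n \<le> p ^ n" using prime_ge_2_nat[OF assms] by (simp add: power_mono)
  finally show ?thesis .
qed

lemma mult_fact:
  fixes p :: nat assumes "prime p"
  shows "multiplicity p (fact n) = (\<Sum>i\<in>{1..n}. n div p ^ i)"
proof (induction n)
  case 0 thus ?case by simp
next
  case (Suc n)
  have pp: "0 < p ^ i" for i using prime_gt_0_nat[OF assms] by simp
  have "multiplicity p (fact (Suc n) :: nat) = multiplicity p (Suc n * fact n)" by (simp add: fact_Suc)
  also have "\<dots> = multiplicity p (Suc n) + multiplicity p (fact n :: nat)"
    by (rule prime_elem_multiplicity_mult_distrib) (use assms in auto)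
  also have "multiplicity p (Suc n) = card {i\<in>{1..Suc n}. p ^ i dvd Suc n}"
    using mult_card[OF assms, of "Suc n"] by simp
  also have "\<dots> = (\<Sum>i\<in>{1..Suc n}. if p ^ i dvd Suc n then 1 else 0)"
    by (rule sum_ind[symmetric]) simp
  finally have e1: "multiplicity p (fact (Suc n) :: nat) = (\<Sum>i\<in>{1..Suc n}. if p ^ i dvd Suc n then 1 else 0) + multiplicity p (fact n :: nat)" .
  have e2: "(\<Sum>i\<in>{1..Suc n}. n div p ^ i) = (\<Sum>i\<in>{1..n}. n div p ^ i) + n div p ^ Suc n"
    by simp
  have e3: "n div p ^ Suc n = 0" using pow_gt[OF assms, of "Suc n"] by simp
  have "multiplicity p (fact (Suc n) :: nat) =
       (\<Sum>i\<in>{1..Suc n}. (if p ^ i dvd Suc n then 1 else 0) + n div p ^ i)"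
    using Suc e1 e2 e3 by (simp only: sum.distrib)
  also have "\<dots> = (\<Sum>i\<in>{1..Suc n}. Suc n div p ^ i)"
    by (rule sum.cong) (use Suc_div_split[OF pp] in auto)
  finally show ?case .
qed

lemma mult_binom:
  fixes p :: nat assumes "prime p" "m > 0"
  shows "p ^ multiplicity p ((2*m) choose m) \<le> 2*m"
proof (rule ccontr)
  let ?v = "multiplicity p ((2*m) choose m)"
  assume "\<not> ?thesis"
  hence big: "2*m < p ^ ?v" by simp
  have pp: "0 < p ^ i" for i using prime_gt_0_nat[OF assms(1)] by simp
  have v1: "?v \<ge> 1" using big assms by (cases ?v) auto
  have "fact m * fact (2*m - m) * ((2*m) choose m) = (fact (2*m) :: nat)"
    by (rule binomial_fact_lemma) simp
  hence "multiplicity p (fact (2*m) :: nat) = multiplicity p (fact m * fact m * ((2*m) choose m) :: nat)"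
    by simp
  also have "\<dots> = multiplicity p (fact m :: nat) + multiplicity p (fact m :: nat) + ?v"
    using assms(1)
    by (simp add: prime_elem_multiplicity_mult_distrib)
  finally have eq: "(\<Sum>i\<in>{1..2*m}. 2*m div p ^ i) = 2 * (\<Sum>i\<in>{1..m}. m div p ^ i) + ?v"
    by (simp add: mult_fact[OF assms(1)])
  have "(\<Sum>i\<in>{1..2*m}. m div p ^ i) = (\<Sum>i\<in>{1..m}. m div p ^ i) + (\<Sum>i\<in>{m<..2*m}. m div p ^ i)"
  proof -
    have "{1..2*m} = {1..m} \<union> {m<..2*m}" by auto
    hence "(\<Sum>i\<in>{1..2*m}. m div p ^ i) = (\<Sum>i\<in>{1..m} \<union> {m<..2*m}. m div p ^ i)" by simp
    also have "\<dots> = (\<Sum>i\<in>{1..m}. m div p ^ i) + (\<Sum>i\<in>{m<..2*m}. m div p ^ i)"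
      by (rule sum.union_disjoint) auto
    finally show ?thesis .
  qed
  moreover have "(\<Sum>i\<in>{m<..2*m}. m div p ^ i) = 0"
  proof (rule sum.neutral, safe)
    fix i assume "i \<in> {m<..2*m}"
    hence "m < p ^ i" using pow_gt[OF assms(1), of i] by simp
    thus "m div p ^ i = 0" by simp
  qed
  ultimately have eq2: "(\<Sum>i\<in>{1..2*m}. 2*m div p ^ i) = 2 * (\<Sum>i\<in>{1..2*m}. m div p ^ i) + ?v"
    using eq by simp
  have "(\<Sum>i\<in>{1..2*m}. 2*m div p ^ i) \<le> (\<Sum>i\<in>{1..2*m}. 2 * (m div p ^ i) + (if i < ?v then 1 else 0))"
  proof (rule sum_mono)
    fix i assume i: "i \<in> {1..2*m}"
    show "2*m div p ^ i \<le> 2 * (m div p ^ i) + (if i < ?v then 1 else 0)"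
    proof (cases "i < ?v")
      case True
      have "2*m div p^i \<le> 2 * (m div p ^ i) + 1"
      proof -
        have "m = p^i * (m div p^i) + m mod p^i" by simp
        hence "2*m = p^i * (2*(m div p^i)) + 2*(m mod p^i)" by (metis add_mult_distrib2 mult.left_commute)
        moreover have "2*(m mod p^i) < 2 * p^i" using pp[of i] by simp
        ultimately have "2*m < p^i * (2*(m div p^i) + 2)" by (simp add: algebra_simps)
        hence "2*m div p^i < 2*(m div p^i) + 2" using pp[of i]
          by (simp add: div_less_iff_less_mult mult.commute)
        thus ?thesis by simp
      qed
      thus ?thesis using True by simp
    next
      case False
      hence "p ^ ?v \<le> p ^ i" using prime_gt_1_nat[OF assms(1)] by (simp add: power_increasing)
      hence "2*m div p^i = 0" using big by simp
      thus ?thesis by simp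
    qed
  qed
  also have "\<dots> = 2 * (\<Sum>i\<in>{1..2*m}. m div p ^ i) + card {i\<in>{1..2*m}. i < ?v}"
    by (simp add: sum.distrib sum_distrib_left sum_ind)
  also have "card {i\<in>{1..2*m}. i < ?v} \<le> card {1..<?v}"
    by (rule card_mono) auto
  finally have "?v \<le> card {1..<?v}" using eq2 by simp
  thus False using v1 by simp
qed

lemma prod_le_pow_card:
  fixes f :: "'a \<Rightarrow> nat" assumes "finite S" "\<forall>x\<in>S. f x \<le> c" shows "prod f S \<le> c ^ card S"
  using assms by (induction S rule: finite_induct) (auto intro: mult_le_mono)

lemma binom_lower: "m > 0 \<Longrightarrow> 2 ^ m \<le> ((2*m) choose m)"
proof -
  assume m: "m > 0"
  have a: "2*m \<le> (2::nat)^m"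
    using m proof (induction m)
    case (Suc k) thus ?case by (cases k) auto
  qed simp
  have "real (2 ^ m) * (2 * real m) \<le> 2^m * 2^m"
    using a by (metis of_nat_le_iff of_nat_mult of_nat_numeral of_nat_power mult_left_mono zero_le_power zero_le_numeral of_nat_0_le_iff)
  also have "\<dots> = 4 ^ m" by (simp add: power_mult_distrib[symmetric])
  finally have "real (2^m) \<le> 4^m / (2 * real m)" using m by (simp add: field_simps)
  also have "\<dots> \<le> real ((2*m) choose m)" by (rule central_binomial_lower_bound[OF m])
  finally show ?thesis by linarith
qed

lemma prime_bound: "\<exists>p::nat. prime p \<and> 2 ^ a < p \<and> p \<le> 2 ^ (2*a+3)"
proof (rule ccontr)
  assume no: "\<not> ?thesis"
  define m :: nat where "m = 2 ^ (2*a+2)"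
  have m0: "m > 0" by (simp add: m_def)
  have m2: "2*m = 2^(2*a+3)" by (simp add: m_def power_add)
  let ?C = "(2*m) choose m"
  have C0: "?C > 0" by simp
  have pf: "prime_factors ?C \<subseteq> {1..2^a}"
  proof
    fix q assume q: "q \<in> prime_factors ?C"
    hence qp: "prime q" and qd: "q dvd ?C" by (auto simp: in_prime_factors_iff)
    have "?C dvd fact (2*m)" using binomial_fact_lemma[of m "2*m"] by (metis dvd_triv_right le_add2 mult_2)
    hence "q \<le> 2*m" using qd qp prime_dvd_fact_iff dvd_trans by blast
    hence "\<not> 2^a < q" using no qp m2 by auto
    thus "q \<in> {1..2^a}" using prime_gt_0_nat[OF qp] by auto
  qed
  have "?C = (\<Prod>q\<in>prime_factors ?C. q ^ multiplicity q ?C)" by (rule prime_factorization_nat[OF C0])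
  also have "\<dots> \<le> (2*m) ^ card (prime_factors ?C)"
    by (rule prod_le_pow_card) (auto intro: mult_binom[OF _ m0] simp: in_prime_factors_iff)
  also have "\<dots> \<le> (2*m) ^ (2^a)"
  proof -
    have "card (prime_factors ?C) \<le> card {1..(2::nat)^a}" by (rule card_mono[OF _ pf]) simp
    thus ?thesis using m0 by (intro power_increasing) auto
  qed
  finally have "2 ^ m \<le> (2*m) ^ (2^a)" using binom_lower[OF m0] by linarith
  also have "(2*m) ^ (2^a) = (2::nat) ^ ((2*a+3) * 2^a)" by (simp add: m2 power_mult)
  finally have "m \<le> (2*a+3) * 2^a" by simp
  moreover have "(2*a+3) * 2^a < m"
  proof -
    have "a < 2^a" by (rule less_exp)
    moreover have "(1::nat) \<le> 2^a" by simp
    ultimately have "2*a+3 < 4 * 2^a" by linarith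
    hence "(2*a+3) * 2^a < 4 * 2^a * 2^a" by simp
    also have "4 * 2^a * 2^a = m" by (simp add: m_def power_add power_mult_distrib) (simp add: power2_eq_square[symmetric] power_mult[symmetric] mult.commute)
    finally show ?thesis .
  qed
  ultimately show False by simp
qed



lemma dvd_small: fixes x p :: int assumes "p dvd x" "\<bar>x\<bar> < p" shows "x = 0"
proof (rule ccontr)
  assume "x \<noteq> 0"
  hence "\<bar>p\<bar> \<le> \<bar>x\<bar>" using assms(1) by (rule dvd_imp_le_int)
  thus False using assms(2) by linarith
qed

lemma poly_roots_mod:
  fixes p :: int
  assumes "prime p"
  shows "\<forall>f R. degree f \<le> d \<longrightarrow> finite R \<longrightarrow> R \<subseteq> {0..<p} \<longrightarrow> d < card R \<longrightarrow>
           (\<forall>r\<in>R. p dvd poly f r) \<longrightarrow> (\<forall>k. p dvd coeff f k)"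
proof (induction d)
  case 0
  show ?case
  proof (intro allI impI)
    fix f :: "int poly" and R :: "int set" and k
    assume d: "degree f \<le> 0" and R: "finite R" "R \<subseteq> {0..<p}" "0 < card R" and z: "\<forall>r\<in>R. p dvd poly f r"
    obtain r where "r \<in> R" using R by (metis card_gt_0_iff ex_in_conv)
    have "[:coeff f 0:] = f" using d by (intro degree_0_id) simp
    hence "poly f r = coeff f 0" by (metis poly_pCons poly_0 mult_zero_right add_0_right)
    hence "p dvd coeff f 0" using z \<open>r \<in> R\<close> by metis
    thus "p dvd coeff f k" using d by (cases k) (auto simp: coeff_eq_0)
  qed
next
  case (Suc d)
  show ?case
  proof (intro allI impI)
    fix f :: "int poly" and R :: "int set" and k
    assume d: "degree f \<le> Suc d" and R: "finite R" "R \<subseteq> {0..<p}" "Suc d < card R" and z: "\<forall>r\<in>R. p dvd poly f r"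
    obtain a where a: "a \<in> R" using R by (metis card.empty ex_in_conv not_less0)
    define q where "q = synthetic_div f a"
    have qd: "degree q \<le> d" using d by (simp add: q_def degree_synthetic_div)
    have corr: "f + smult a q = pCons (poly f a) q" by (simp add: q_def synthetic_div_correct)
    have fq: "poly f b = (b - a) * poly q b + poly f a" for b
    proof -
      have "[:- a, 1:] * q + [:poly f a:] = f" unfolding q_def by (rule synthetic_div_correct')
      hence "poly f b = poly ([:- a, 1:] * q + [:poly f a:]) b" by simp
      thus ?thesis by (simp add: algebra_simps)
    qed
    have R': "finite (R - {a})" "R - {a} \<subseteq> {0..<p}" "d < card (R - {a})"
      using R a by auto
    have "\<forall>r\<in>R - {a}. p dvd poly q r"
    proof
      fix b assume b: "b \<in> R - {a}"
      have "p dvd poly f b" "p dvd poly f a" using z b a by auto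
      hence "p dvd (b - a) * poly q b" using fq[of b] by (metis dvd_add_left_iff add.commute)
      moreover have "\<not> p dvd (b - a)"
      proof
        assume "p dvd (b - a)"
        moreover have "a \<in> {0..<p}" "b \<in> {0..<p}" using b a R(2) by auto
        hence "\<bar>b - a\<bar> < p" by auto
        ultimately have "b - a = 0" by (rule dvd_small)
        thus False using b by simp
      qed
      ultimately show "p dvd poly q b" using assms prime_dvd_mult_iff by blast
    qed
    hence qc: "\<forall>k. p dvd coeff q k" using Suc.IH qd R' by blast
    have pa: "p dvd poly f a" using z a by auto
    have "coeff f k + a * coeff q k = coeff (pCons (poly f a) q) k"
      using arg_cong[OF corr, of "\<lambda>g. coeff g k"] by simp
    thus "p dvd coeff f k"
    proof (cases k)
      case 0
      hence "coeff f k = poly f a - a * coeff q 0" using \<open>coeff f k + a * coeff q k = _\<close> by simp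
      thus ?thesis using pa qc by simp
    next
      case (Suc k')
      hence "coeff f k = coeff q k' - a * coeff q k" using \<open>coeff f k + a * coeff q k = _\<close> by simp
      thus ?thesis using qc by simp
    qed
  qed
qed

lemma rs_unique:
  assumes p: "prime p" and np: "n < p" and len: "length ds = length ds'"
    and b1: "\<forall>x\<in>set ds. x < p" and b2: "\<forall>x\<in>set ds'. x < p"
    and K: "K \<subseteq> {..<n}" and cK: "length ds \<le> card K"
    and eq: "\<forall>j\<in>K. rs_enc p ds j = rs_enc p ds' j"
  shows "ds = ds'"
proof (cases "length ds = 0")
  case True thus ?thesis using len by simp
next
  case False
  let ?L = "length ds"
  define e where "e k = int (ds ! k) - int (ds' ! k)" for k
  define f where "f = (\<Sum>k<?L. monom (e k) k)"
  have cf: "coeff f k = (if k < ?L then e k else 0)" for k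
    by (simp add: f_def coeff_sum)
  have pf: "poly f x = (\<Sum>k<?L. e k * x ^ k)" for x
    by (simp add: f_def poly_sum poly_monom)
  have df: "degree f \<le> ?L - 1" by (rule degree_le) (auto simp: cf)
  define R where "R = (\<lambda>j. int j + 1) ` K"
  have finK: "finite K" using K finite_subset by blast
  have cR: "card R = card K" unfolding R_def by (rule card_image) (auto simp: inj_on_def)
  have R1: "finite R" "R \<subseteq> {0..<int p}" using K np finK by (auto simp: R_def)
  have R2: "?L - 1 < card R" using cR cK False by linarith
  have R3: "\<forall>r\<in>R. int p dvd poly f r"
  proof
    fix r assume "r \<in> R"
    then obtain j where j: "j \<in> K" "r = int j + 1" by (auto simp: R_def)
    have "(\<Sum>k<?L. ds ! k * (j + 1) ^ k) mod p = (\<Sum>k<?L. ds' ! k * (j + 1) ^ k) mod p"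
      using eq j len by (simp add: rs_enc_def)
    hence "int (\<Sum>k<?L. ds ! k * (j + 1) ^ k) mod int p = int (\<Sum>k<?L. ds' ! k * (j + 1) ^ k) mod int p"
      by (metis of_nat_mod)
    hence "int p dvd int (\<Sum>k<?L. ds ! k * (j + 1) ^ k) - int (\<Sum>k<?L. ds' ! k * (j + 1) ^ k)"
      by (simp add: mod_eq_dvd_iff)
    also have "int (\<Sum>k<?L. ds ! k * (j + 1) ^ k) - int (\<Sum>k<?L. ds' ! k * (j + 1) ^ k) = poly f r"
      by (simp add: pf j e_def sum_subtractf left_diff_distrib add.commute)
    finally show "int p dvd poly f r" .
  qed
  have pr: "prime (int p)" using p by simp
  have dv: "\<forall>k. int p dvd coeff f k" using poly_roots_mod[OF pr, of "?L - 1"] df R1 R2 R3 by blast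
  show ?thesis
  proof (rule nth_equalityI)
    show "length ds = length ds'" by fact
    fix k assume k: "k < length ds"
    have "int p dvd e k" using dv[rule_format, of k] k cf by simp
    moreover have "ds ! k < p" "ds' ! k < p" using b1 b2 k len nth_mem by (metis, metis)
    hence "\<bar>e k\<bar> < int p" by (simp add: e_def)
    ultimately have "e k = 0" by (rule dvd_small)
    thus "ds ! k = ds' ! k" by (simp add: e_def)
  qed
qed



lemma bits_to_nat_lt: "bits_to_nat bs < 2 ^ length bs"
  by (induction bs) (auto simp: bits_to_nat_def)

lemma nat_to_bits_Suc: "nat_to_bits (Suc w) x = odd x # nat_to_bits w (x div 2)"
proof -
  have "nat_to_bits (Suc w) x = map (\<lambda>i. odd (x div 2 ^ i)) (0 # map Suc [0..<w])"
    unfolding nat_to_bits_def by (simp only: upt_conv_Cons map_Suc_upt)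
  also have "\<dots> = odd x # map (\<lambda>i. odd (x div 2 div 2 ^ i)) [0..<w]"
    by (simp add: div_mult2_eq)
  finally show ?thesis by (simp add: nat_to_bits_def)
qed

lemma nat_to_bits_zero: "nat_to_bits w 0 = replicate w False"
  by (simp add: nat_to_bits_def map_replicate_const)

lemma nat_to_bits_inv: "length bs \<le> w \<Longrightarrow> nat_to_bits w (bits_to_nat bs) = bs @ replicate (w - length bs) False"
proof (induction bs arbitrary: w)
  case Nil thus ?case by (simp add: bits_to_nat_def nat_to_bits_zero)
next
  case (Cons b bs)
  then obtain w' where w: "w = Suc w'" by (cases w) auto
  have e: "bits_to_nat (b # bs) = (if b then 1 else 0) + 2 * bits_to_nat bs" by (simp add: bits_to_nat_def)
  show ?case using Cons w by (simp add: nat_to_bits_Suc e)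
qed

lemma concat_blocks: "concat (map (\<lambda>k. take b (drop (k*b) xs)) [0..<q]) = take (q*b) xs"
proof (induction q)
  case (Suc q)
  have e: "Suc q * b = q*b + b" by simp
  have "take (Suc q * b) xs = take (q*b) xs @ take b (drop (q*b) xs)"
    by (simp only: e take_add)
  thus ?case using Suc by simp
qed simp

lemma length_msg_blocks: "length (msg_blocks n l v) = tB n + 1"
  by (simp add: msg_blocks_def)

lemma msg_blocks_lt: "x \<in> set (msg_blocks n l v) \<Longrightarrow> x < 2 ^ blk n l"
proof -
  assume "x \<in> set (msg_blocks n l v)"
  then obtain k where x: "x = bits_to_nat (take (blk n l) (drop (k * blk n l) v))"
    by (auto simp: msg_blocks_def)
  have "x < 2 ^ length (take (blk n l) (drop (k * blk n l) v))" unfolding x by (rule bits_to_nat_lt)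
  also have "\<dots> \<le> 2 ^ blk n l" by (intro power_increasing) auto
  finally show ?thesis .
qed

lemma blk_bound: "l \<le> (tB n + 1) * blk n l"
proof -
  let ?t = "tB n"
  have "(l + ?t) div (?t+1) * (?t+1) + (l + ?t) mod (?t+1) = l + ?t" by (rule div_mult_mod_eq)
  moreover have "(l + ?t) mod (?t+1) \<le> ?t" using mod_less_divisor[of "?t+1" "l + ?t"] by linarith
  ultimately have "l \<le> (l + ?t) div (?t+1) * (?t+1)" by linarith
  thus ?thesis unfolding blk_def by (simp add: mult.commute)
qed

lemma unblocks_msg_blocks:
  assumes "length v = l" shows "unblocks n l (msg_blocks n l v) = v"
proof -
  let ?b = "blk n l" and ?q = "tB n + 1"
  define ys where "ys = v @ replicate (?q * ?b) False"
  have blk_eq: "nat_to_bits ?b (bits_to_nat (take ?b (drop (k * ?b) v))) = take ?b (drop (k * ?b) ys)"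
    if "k < ?q" for k
  proof -
    have "k * ?b + ?b \<le> ?q * ?b" using that by (metis Suc_eq_plus1 Suc_leI add.commute mult_Suc mult_le_mono1)
    hence "nat_to_bits ?b (bits_to_nat (take ?b (drop (k * ?b) v))) =
        take ?b (drop (k * ?b) v) @ replicate (?b - length (take ?b (drop (k * ?b) v))) False"
      by (intro nat_to_bits_inv) simp
    also have "\<dots> = take ?b (drop (k * ?b) ys)"
    proof -
      define u where "u = drop (k * ?b) v"
      have "drop (k * ?b) ys = u @ replicate (?q * ?b - (k * ?b - length v)) False"
        by (simp add: ys_def u_def)
      hence "take ?b (drop (k * ?b) ys) = take ?b u @ replicate (min (?b - length u) (?q * ?b - (k * ?b - length v))) False"
        by (simp add: take_replicate)
      also have "min (?b - length u) (?q * ?b - (k * ?b - length v)) = ?b - length (take ?b u)"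
      proof -
        have "?b - length u \<le> ?q * ?b - (k * ?b - length v)"
          using \<open>k * ?b + ?b \<le> ?q * ?b\<close> by linarith
        hence "min (?b - length u) (?q * ?b - (k * ?b - length v)) = ?b - length u" by simp
        also have "\<dots> = ?b - length (take ?b u)" by simp
        finally show ?thesis .
      qed
      finally show ?thesis by (simp add: u_def)
    qed
    finally show ?thesis .
  qed
  have "map (nat_to_bits ?b) (msg_blocks n l v) = map (\<lambda>k. take ?b (drop (k * ?b) ys)) [0..<?q]"
    unfolding msg_blocks_def by (simp add: blk_eq)
  hence "concat (map (nat_to_bits ?b) (msg_blocks n l v)) = take (?q * ?b) ys"
    by (simp only: concat_blocks)
  hence "unblocks n l (msg_blocks n l v) = take l (take (?q * ?b) ys)" by (simp add: unblocks_def)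
  also have "\<dots> = v" using blk_bound[of l n] assms by (simp add: ys_def min_def)
  finally show ?thesis .
qed



definition Hg :: "nat \<Rightarrow> (nat \<Rightarrow> nat \<Rightarrow> bool) \<Rightarrow> nat \<Rightarrow> nat \<Rightarrow> bool" where
  "Hg n G = (\<lambda>x y. x < n \<and> y < n \<and> x \<noteq> y \<and> \<not> G x y)"

definition verts :: "(nat \<times> nat) set \<Rightarrow> nat set" where
  "verts M = {x. \<exists>(a, b)\<in>M. x = a \<or> x = b}"

definition starC :: "nat \<Rightarrow> malg \<Rightarrow> (nat \<Rightarrow> nat \<Rightarrow> bool) \<Rightarrow> nat set" where
  "starC n alg G = (let M = alg n (Hg n G); Nb = {..<n} - verts M in
      Nb - {i\<in>Nb. \<exists>(j, k)\<in>M. Hg n G i j \<and> Hg n G i k})"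

definition starD :: "nat \<Rightarrow> malg \<Rightarrow> (nat \<Rightarrow> nat \<Rightarrow> bool) \<Rightarrow> nat set" where
  "starD n alg G = {..<n} - {j\<in>verts (alg n (Hg n G)). \<exists>k\<in>starC n alg G. Hg n G j k}"

lemma star_eq: "star n t alg G = (if n - 2 * t \<le> card (starC n alg G) \<and> n - t \<le> card (starD n alg G)
   then Some (starC n alg G, starD n alg G) else None)"
  unfolding star_def starC_def starD_def Hg_def verts_def Let_def by simp

definition Hprop :: "nat \<Rightarrow> (nat \<Rightarrow> nat \<Rightarrow> bool) \<Rightarrow> bool" where
  "Hprop n H \<longleftrightarrow> (\<forall>x y. H x y \<longrightarrow> x < n \<and> y < n \<and> x \<noteq> y \<and> H y x)"

lemma Hprop_Hg: "(\<forall>x y. G x y = G y x) \<Longrightarrow> Hprop n (Hg n G)"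
  by (auto simp: Hprop_def Hg_def)

lemma in_verts: "x \<in> verts M \<longleftrightarrow> (\<exists>e\<in>M. x = fst e \<or> x = snd e)"
  by (auto simp: verts_def) force+

lemma verts_sub: "is_matching n H M \<Longrightarrow> verts M \<subseteq> {..<n}"
  by (auto simp: verts_def is_matching_def)

lemma matching_disj: "is_matching n H M \<Longrightarrow> e \<in> M \<Longrightarrow> e' \<in> M \<Longrightarrow> e \<noteq> e' \<Longrightarrow>
   {fst e, snd e} \<inter> {fst e', snd e'} = {}"
  by (auto simp: is_matching_def)

lemma matching_pair: "is_matching n H M \<Longrightarrow> e \<in> M \<Longrightarrow> fst e < n \<and> snd e < n \<and> fst e \<noteq> snd e \<and> H (fst e) (snd e)"
  by (auto simp: is_matching_def)

lemma verts_card: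
  assumes "is_matching n H M" "finite M" shows "card (verts M) = 2 * card M"
proof -
  have "verts M = (\<Union>e\<in>M. {fst e, snd e})" by (auto simp: verts_def)
  hence "card (verts M) = (\<Sum>e\<in>M. card {fst e, snd e})"
    using assms by (simp add: card_UN_disjoint matching_disj)
  also have "\<dots> = (\<Sum>e\<in>M. 2)"
    using matching_pair[OF assms(1)] by (intro sum.cong) auto
  finally show ?thesis by simp
qed

lemma augment1:
  assumes mm: "is_max_matching n H M" and hp: "Hprop n H"
    and u: "u \<notin> verts M" and w: "w \<notin> verts M" and h: "H u w"
  shows False
proof -
  have m: "is_matching n H M" "finite M" using mm by (auto simp: is_max_matching_def)
  let ?M = "insert (u, w) M"
  have "is_matching n H ?M"
    using m(1) u w h hp unfolding is_matching_def Hprop_def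
    by (auto simp: in_verts)
  moreover have "(u, w) \<notin> M" using u by (auto simp: in_verts)
  hence "card ?M = card M + 1" using m(2) by simp
  ultimately show False using mm by (auto simp: is_max_matching_def)
qed

lemma augment2:
  assumes mm: "is_max_matching n H M" and hp: "Hprop n H" and e: "e \<in> M"
    and uw: "u \<noteq> w" and u: "u \<notin> verts M" and w: "w \<notin> verts M"
    and h1: "H u (fst e)" and h2: "H w (snd e)"
  shows False
proof -
  have m: "is_matching n H M" "finite M" using mm by (auto simp: is_max_matching_def)
  obtain a b where ab: "e = (a, b)" by (cases e)
  have ep: "a < n" "b < n" "a \<noteq> b" using matching_pair[OF m(1) e] ab by auto
  have dis: "\<And>e'. e' \<in> M \<Longrightarrow> e' \<noteq> e \<Longrightarrow> a \<noteq> fst e' \<and> a \<noteq> snd e' \<and> b \<noteq> fst e' \<and> b \<noteq> snd e'"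
    using matching_disj[OF m(1) e] ab by fastforce
  have uM: "\<And>e'. e' \<in> M \<Longrightarrow> u \<noteq> fst e' \<and> u \<noteq> snd e'" using u by (auto simp: in_verts)
  have wM: "\<And>e'. e' \<in> M \<Longrightarrow> w \<noteq> fst e' \<and> w \<noteq> snd e'" using w by (auto simp: in_verts)
  have ua: "u \<noteq> a" "u \<noteq> b" "w \<noteq> a" "w \<noteq> b" using uM[OF e] wM[OF e] ab by auto
  have hua: "H u a" and hbw: "H b w" using h1 h2 hp ab unfolding Hprop_def by auto
  let ?M = "insert (u, a) (insert (b, w) (M - {e}))"
  have "is_matching n H ?M"
  proof -
    have "(\<forall>(x, y)\<in>?M. x < n \<and> y < n \<and> x \<noteq> y \<and> H x y)"
      using hua hbw hp m(1) unfolding Hprop_def is_matching_def by auto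
    moreover have "\<forall>e1\<in>?M. \<forall>e2\<in>?M. e1 \<noteq> e2 \<longrightarrow> {fst e1, snd e1} \<inter> {fst e2, snd e2} = {}"
    proof (intro ballI impI)
      fix e1 e2 assume e1: "e1 \<in> ?M" and e2: "e2 \<in> ?M" and ne: "e1 \<noteq> e2"
      show "{fst e1, snd e1} \<inter> {fst e2, snd e2} = {}"
      proof (cases "e1 \<in> M - {e} \<and> e2 \<in> M - {e}")
        case True thus ?thesis using matching_disj[OF m(1)] ne by auto
      next
        case False
        thus ?thesis using e1 e2 ne ua ep uw uM wM dis by (auto; metis)
      qed
    qed
    ultimately show ?thesis unfolding is_matching_def by blast
  qed
  moreover have "card ?M = card M + 1"
  proof -
    have "(b, w) \<notin> M - {e}" using wM by force
    moreover have "(u, a) \<notin> insert (b, w) (M - {e})" using uM ua by force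
    ultimately have "card ?M = card (M - {e}) + 2" using m(2) by simp
    moreover have "card (M - {e}) + 1 = card M" using m(2) e by (metis Suc_eq_plus1 card_Suc_Diff1)
    ultimately show ?thesis by simp
  qed
  ultimately show False using mm by (auto simp: is_max_matching_def)
qed

lemma starC_sub: "starC n alg G \<subseteq> {..<n} - verts (alg n (Hg n G))"
  by (auto simp: starC_def Let_def)

lemma star_some:
  assumes ma: "matching_alg alg" and Gs: "\<forall>x y. G x y = G y x"
    and st: "star n t alg G = Some (C, D)"
  shows "C \<subseteq> {..<n}" "D \<subseteq> {..<n}" "C \<subseteq> D" "n - 2 * t \<le> card C" "n - t \<le> card D"
    "\<forall>c\<in>C. \<forall>d\<in>D. c \<noteq> d \<longrightarrow> G c d"
proof -
  have CD: "C = starC n alg G" "D = starD n alg G" "n - 2 * t \<le> card C" "n - t \<le> card D"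
    using st by (auto simp: star_eq split: if_splits)
  thus "n - 2 * t \<le> card C" "n - t \<le> card D" by auto
  show "C \<subseteq> {..<n}" using CD starC_sub by blast
  show "D \<subseteq> {..<n}" using CD by (auto simp: starD_def)
  show "C \<subseteq> D" using CD starC_sub by (auto simp: starD_def)
  show "\<forall>c\<in>C. \<forall>d\<in>D. c \<noteq> d \<longrightarrow> G c d"
  proof (intro ballI impI, rule ccontr)
    fix c d assume c: "c \<in> C" and d: "d \<in> D" and cd: "c \<noteq> d" and ng: "\<not> G c d"
    let ?M = "alg n (Hg n G)"
    have mm: "is_max_matching n (Hg n G) ?M" using ma by (simp add: matching_alg_def)
    have hp: "Hprop n (Hg n G)" using Gs by (rule Hprop_Hg)
    have cn: "c < n" "c \<notin> verts ?M" using c CD starC_sub by auto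
    have dn: "d < n" "d \<notin> {j\<in>verts ?M. \<exists>k\<in>starC n alg G. Hg n G j k}" using d CD by (auto simp: starD_def)
    have h: "Hg n G c d" using cn dn cd ng by (simp add: Hg_def)
    hence h': "Hg n G d c" using hp by (simp add: Hprop_def)
    show False
    proof (cases "d \<in> verts ?M")
      case True thus False using dn h' c CD by auto
    next
      case False thus False using augment1[OF mm hp cn(2) False h] by simp
    qed
  qed
qed

lemma star_none:
  assumes ma: "matching_alg alg" and M': "is_matching n (Hg n G) M'" "finite M'" "t + 1 \<le> card M'"
    and nt: "2 * t < n"
  shows "star n t alg G = None"
proof -
  let ?M = "alg n (Hg n G)"
  have mm: "is_matching n (Hg n G) ?M" "finite ?M" "card M' \<le> card ?M"
    using ma M' by (auto simp: matching_alg_def is_max_matching_def)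
  have "card (verts ?M) = 2 * card ?M" by (rule verts_card[OF mm(1,2)])
  hence vc: "2 * t + 2 \<le> card (verts ?M)" using mm M' by simp
  have "card (starC n alg G) \<le> card ({..<n} - verts ?M)" by (rule card_mono[OF _ starC_sub]) simp
  also have "\<dots> = n - card (verts ?M)" using verts_sub[OF mm(1)] by (simp add: card_Diff_subset finite_subset)
  finally have "card (starC n alg G) < n - 2 * t" using vc nt by linarith
  thus ?thesis by (simp add: star_eq)
qed

lemma card_inj_le: "inj_on f A \<Longrightarrow> f ` A \<subseteq> B \<Longrightarrow> finite B \<Longrightarrow> card A \<le> card B"
  by (metis card_image card_mono)

lemma star_valid:
  assumes ma: "matching_alg alg" and Gs: "\<forall>x y. G x y = G y x"
    and Cr: "Cr \<subseteq> {..<n}" "card Cr \<le> t"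
    and hon: "\<forall>x y. x < n \<longrightarrow> y < n \<longrightarrow> x \<noteq> y \<longrightarrow> x \<notin> Cr \<longrightarrow> y \<notin> Cr \<longrightarrow> G x y"
  shows "star n t alg G = Some (starC n alg G, starD n alg G) \<and> n - 2 * t \<le> card (starC n alg G - Cr)"
proof -
  let ?H = "Hg n G" let ?M = "alg n ?H" let ?C = "starC n alg G" let ?N = "verts ?M"
  have mm: "is_max_matching n ?H ?M" using ma by (simp add: matching_alg_def)
  have m: "is_matching n ?H ?M" "finite ?M" using mm by (auto simp: is_max_matching_def)
  have hp: "Hprop n ?H" using Gs by (rule Hprop_Hg)
  have finCr: "finite Cr" using Cr finite_subset by blast
  have Hcr: "\<And>x y. ?H x y \<Longrightarrow> x \<in> Cr \<or> y \<in> Cr" using hon by (auto simp: Hg_def)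
  have ecr: "\<And>e. e \<in> ?M \<Longrightarrow> fst e \<in> Cr \<or> snd e \<in> Cr" using matching_pair[OF m(1)] Hcr by blast
  have cM: "card ?M \<le> card Cr"
  proof (rule card_inj_le[where f = "\<lambda>e. if fst e \<in> Cr then fst e else snd e"])
    show "inj_on (\<lambda>e. if fst e \<in> Cr then fst e else snd e) ?M"
    proof (rule inj_onI)
      fix e1 e2 assume e: "e1 \<in> ?M" "e2 \<in> ?M" and eq: "(if fst e1 \<in> Cr then fst e1 else snd e1) = (if fst e2 \<in> Cr then fst e2 else snd e2)"
      show "e1 = e2"
      proof (rule ccontr)
        assume "e1 \<noteq> e2"
        hence "{fst e1, snd e1} \<inter> {fst e2, snd e2} = {}" using matching_disj[OF m(1) e] by simp
        thus False using eq by (auto split: if_splits)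
      qed
    qed
    show "(\<lambda>e. if fst e \<in> Cr then fst e else snd e) ` ?M \<subseteq> Cr" using ecr by auto
  qed (rule finCr)
  define T where "T = {i\<in>{..<n} - ?N. \<exists>(j, k)\<in>?M. ?H i j \<and> ?H i k}"
  have Ceq: "?C = ({..<n} - ?N) - T" by (simp add: starC_def T_def Let_def)
  define Hon where "Hon = {..<n} - Cr"
  define g where "g h = (if h \<in> ?N then (SOME e. e \<in> ?M \<and> (h = fst e \<or> h = snd e))
                         else (SOME e. e \<in> ?M \<and> ?H h (fst e) \<and> ?H h (snd e)))" for h
  have gN: "g h \<in> ?M \<and> (h = fst (g h) \<or> h = snd (g h))" if "h \<in> ?N" for h
  proof -
    have "\<exists>e. e \<in> ?M \<and> (h = fst e \<or> h = snd e)" using that unfolding in_verts by blast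
    hence "(SOME e. e \<in> ?M \<and> (h = fst e \<or> h = snd e)) \<in> ?M \<and> (h = fst (SOME e. e \<in> ?M \<and> (h = fst e \<or> h = snd e)) \<or> h = snd (SOME e. e \<in> ?M \<and> (h = fst e \<or> h = snd e)))"
      by (rule someI_ex)
    thus ?thesis using that unfolding g_def by simp
  qed
  have gT: "g h \<in> ?M \<and> ?H h (fst (g h)) \<and> ?H h (snd (g h))" if "h \<in> T" for h
  proof -
    have "h \<notin> ?N" using that by (simp add: T_def)
    moreover have "\<exists>e. e \<in> ?M \<and> ?H h (fst e) \<and> ?H h (snd e)" using that unfolding T_def by force
    hence "(SOME e. e \<in> ?M \<and> ?H h (fst e) \<and> ?H h (snd e)) \<in> ?M \<and> ?H h (fst (SOME e. e \<in> ?M \<and> ?H h (fst e) \<and> ?H h (snd e))) \<and> ?H h (snd (SOME e. e \<in> ?M \<and> ?H h (fst e) \<and> ?H h (snd e)))"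
      by (rule someI_ex)
    ultimately show ?thesis unfolding g_def by simp
  qed
  have Hhon: "\<not> ?H x y" if "x \<in> Hon" "y \<in> Hon" for x y using that hon by (auto simp: Hg_def Hon_def)
  have cHT: "card (Hon \<inter> (?N \<union> T)) \<le> card ?M"
  proof (rule card_inj_le[where f = g])
    show "g ` (Hon \<inter> (?N \<union> T)) \<subseteq> ?M" using gN gT by auto
    show "inj_on g (Hon \<inter> (?N \<union> T))"
    proof (rule inj_onI, rule ccontr)
      fix h1 h2 assume h1: "h1 \<in> Hon \<inter> (?N \<union> T)" and h2: "h2 \<in> Hon \<inter> (?N \<union> T)"
        and eq: "g h1 = g h2" and ne: "h1 \<noteq> h2"
      have TN: "T \<inter> ?N = {}" by (auto simp: T_def)
      show False
      proof (cases "h1 \<in> ?N")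
        case True note t1 = True
        show False
        proof (cases "h2 \<in> ?N")
          case True
          have "fst (g h1) \<in> Hon" "snd (g h1) \<in> Hon" using gN[OF t1] gN[OF True] eq ne h1 h2 by auto
          moreover have "?H (fst (g h1)) (snd (g h1))" using gN[OF t1] matching_pair[OF m(1)] by blast
          ultimately show False using Hhon by blast
        next
          case False
          hence "h2 \<in> T" using h2 by auto
          hence "?H h2 h1" using gT[of h2] gN[OF t1] eq by auto
          thus False using Hhon h1 h2 by auto
        qed
      next
        case False
        hence t1: "h1 \<in> T" using h1 by auto
        show False
        proof (cases "h2 \<in> ?N")
          case True
          hence "?H h1 h2" using gT[OF t1] gN[of h2] eq by auto
          thus False using Hhon h1 h2 by auto
        next
          case False
          hence t2: "h2 \<in> T" using h2 by auto
          have n1: "h1 \<notin> ?N" "h2 \<notin> ?N" using t1 t2 TN by auto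
          have a1: "g h1 \<in> ?M" "?H h1 (fst (g h1))" using gT[OF t1] by auto
          have a2: "?H h2 (snd (g h1))" using gT[OF t2] eq by auto
          show False by (rule augment2[OF mm hp a1(1) ne n1 a1(2) a2])
        qed
      qed
    qed
  qed (rule m(2))
  have "Hon - (?N \<union> T) \<subseteq> ?C - Cr" using Ceq by (auto simp: Hon_def)
  hence "card (Hon - (?N \<union> T)) \<le> card (?C - Cr)" by (intro card_mono) (auto simp: Ceq)
  moreover have "card (Hon - (?N \<union> T)) = card Hon - card (Hon \<inter> (?N \<union> T))"
    by (rule card_Diff_subset_Int) (simp add: Hon_def)
  moreover have "card Hon = n - card Cr" using Cr by (simp add: Hon_def card_Diff_subset finCr)
  ultimately have c1: "n - 2 * t \<le> card (?C - Cr)" using cHT cM Cr by linarith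
  have finC: "finite ?C" using starC_sub[of n alg G] finite_subset by blast
  have "card (?C - Cr) \<le> card ?C" using finC by (intro card_mono) auto
  hence c2: "n - 2 * t \<le> card ?C" using c1 by linarith
  define B where "B = {j\<in>?N. \<exists>k\<in>?C. ?H j k}"
  have cB: "card B \<le> card ?M"
  proof (rule card_inj_le[where f = "\<lambda>h. SOME e. e \<in> ?M \<and> (h = fst e \<or> h = snd e)"])
    have gB: "(SOME e. e \<in> ?M \<and> (h = fst e \<or> h = snd e)) \<in> ?M \<and>
       (h = fst (SOME e. e \<in> ?M \<and> (h = fst e \<or> h = snd e)) \<or> h = snd (SOME e. e \<in> ?M \<and> (h = fst e \<or> h = snd e)))"
      if "h \<in> B" for h
    proof -
      have "h \<in> ?N" using that by (simp add: B_def)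
      hence "\<exists>e. e \<in> ?M \<and> (h = fst e \<or> h = snd e)" unfolding in_verts by blast
      thus ?thesis by (rule someI_ex)
    qed
    show "(\<lambda>h. SOME e. e \<in> ?M \<and> (h = fst e \<or> h = snd e)) ` B \<subseteq> ?M" using gB by auto
    show "inj_on (\<lambda>h. SOME e. e \<in> ?M \<and> (h = fst e \<or> h = snd e)) B"
    proof (rule inj_onI, rule ccontr)
      fix h1 h2 assume h1: "h1 \<in> B" and h2: "h2 \<in> B" and ne: "h1 \<noteq> h2"
        and eq: "(SOME e. e \<in> ?M \<and> (h1 = fst e \<or> h1 = snd e)) = (SOME e. e \<in> ?M \<and> (h2 = fst e \<or> h2 = snd e))"
      define e where "e = (SOME e. e \<in> ?M \<and> (h1 = fst e \<or> h1 = snd e))"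
      have e1: "e \<in> ?M" "h1 = fst e \<or> h1 = snd e" using gB[OF h1] by (auto simp: e_def)
      have e2: "h2 = fst e \<or> h2 = snd e" using gB[OF h2] eq by (auto simp: e_def)
      obtain c1 where c1: "c1 \<in> ?C" "?H h1 c1" using h1 by (auto simp: B_def)
      obtain c2 where c2: "c2 \<in> ?C" "?H h2 c2" using h2 by (auto simp: B_def)
      have cN: "c1 \<notin> ?N" "c2 \<notin> ?N" using c1 c2 starC_sub by auto
      have hc1: "?H c1 h1" "?H c2 h2" using c1 c2 hp by (auto simp: Hprop_def)
      show False
      proof (cases "c1 = c2")
        case True
        have "?H c1 (fst e) \<and> ?H c1 (snd e)" using hc1 True e1 e2 ne by auto
        hence hh: "?H c1 (fst e)" "?H c1 (snd e)" by auto
        have "\<exists>(j, k)\<in>?M. ?H c1 j \<and> ?H c1 k" using e1(1) hh by (intro bexI[of _ e]) (auto simp: case_prod_beta)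
        moreover have "c1 < n" using hh hp by (simp add: Hprop_def)
        ultimately have "c1 \<in> T" using cN unfolding T_def by blast
        thus False using c1 Ceq by auto
      next
        case False
        show False
        proof (cases "h1 = fst e")
          case True
          hence "h2 = snd e" using e2 ne by auto
          thus False using augment2[OF mm hp e1(1) False cN] hc1 True by auto
        next
          case f: False
          hence "h1 = snd e" "h2 = fst e" using e1 e2 ne by auto
          thus False using augment2[OF mm hp e1(1) _ cN(2) cN(1)] hc1 False by auto
        qed
      qed
    qed
  qed (rule m(2))
  have "starD n alg G = {..<n} - B" by (simp add: starD_def B_def)
  moreover have "B \<subseteq> {..<n}" using verts_sub[OF m(1)] by (auto simp: B_def)
  ultimately have "card (starD n alg G) = n - card B" by (simp add: card_Diff_subset finite_subset)
  hence "n - t \<le> card (starD n alg G)" using cB cM Cr by linarith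
  thus ?thesis using c1 c2 by (simp add: star_eq)
qed




lemma build_matching:
  assumes S: "finite S"
  shows "\<forall>A B. finite A \<longrightarrow> finite B \<longrightarrow> A \<inter> B = {} \<longrightarrow> k \<le> card A \<longrightarrow> k \<le> card B \<longrightarrow>
     (0 < k \<longrightarrow> card (S \<inter> (A \<union> B)) < k) \<longrightarrow>
     (\<exists>M. M \<subseteq> A \<times> B \<and> finite M \<and> card M = k \<and> inj_on fst M \<and> inj_on snd M \<and>
          (\<forall>e\<in>M. fst e \<notin> S \<or> snd e \<notin> S))"
proof (induction k)
  case 0
  show ?case by (intro allI impI exI[of _ "{}"]) auto
next
  case (Suc k)
  show ?case
  proof (intro allI impI)
    fix A B :: "'a set"
    assume fA: "finite A" and fB: "finite B" and dj: "A \<inter> B = {}" and cA: "Suc k \<le> card A"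
      and cB: "Suc k \<le> card B" and cS: "0 < Suc k \<longrightarrow> card (S \<inter> (A \<union> B)) < Suc k"
    have cS': "card (S \<inter> (A \<union> B)) < Suc k" using cS by simp
    have fU: "finite (S \<inter> (A \<union> B))" using fA fB by simp
    have "\<exists>a b. a \<in> A \<and> b \<in> B \<and> (a \<notin> S \<or> b \<notin> S) \<and> (0 < k \<longrightarrow> card (S \<inter> ((A - {a}) \<union> (B - {b}))) < k)"
    proof (cases "\<exists>a\<in>A - S. \<exists>b\<in>B \<inter> S. True")
      case True
      then obtain a b where ab: "a \<in> A - S" "b \<in> B \<inter> S" by blast
      have "S \<inter> ((A - {a}) \<union> (B - {b})) = (S \<inter> (A \<union> B)) - {b}" using ab dj by auto
      hence "card (S \<inter> ((A - {a}) \<union> (B - {b}))) = card (S \<inter> (A \<union> B)) - 1"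
        using ab fU by (simp add: card_Diff_singleton)
      moreover have "b \<in> S \<inter> (A \<union> B)" using ab by auto
      hence "card (S \<inter> (A \<union> B)) > 0" using fU card_gt_0_iff by blast
      ultimately have "card (S \<inter> ((A - {a}) \<union> (B - {b}))) < k" using cS' by linarith
      moreover have "a \<in> A" "b \<in> B" "a \<notin> S \<or> b \<notin> S" using ab by auto
      ultimately have "a \<in> A \<and> b \<in> B \<and> (a \<notin> S \<or> b \<notin> S) \<and> (0 < k \<longrightarrow> card (S \<inter> ((A - {a}) \<union> (B - {b}))) < k)"
        by blast
      thus ?thesis by blast
    next
      case F1: False
      show ?thesis
      proof (cases "\<exists>a\<in>A \<inter> S. \<exists>b\<in>B - S. True")
        case True
        then obtain a b where ab: "a \<in> A \<inter> S" "b \<in> B - S" by blast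
        have "S \<inter> ((A - {a}) \<union> (B - {b})) = (S \<inter> (A \<union> B)) - {a}" using ab dj by auto
        hence "card (S \<inter> ((A - {a}) \<union> (B - {b}))) = card (S \<inter> (A \<union> B)) - 1"
          using ab fU by (simp add: card_Diff_singleton)
        moreover have "a \<in> S \<inter> (A \<union> B)" using ab by auto
        hence "card (S \<inter> (A \<union> B)) > 0" using fU card_gt_0_iff by blast
        ultimately have "card (S \<inter> ((A - {a}) \<union> (B - {b}))) < k" using cS' by linarith
        moreover have "a \<in> A" "b \<in> B" "a \<notin> S \<or> b \<notin> S" using ab by auto
        ultimately have "a \<in> A \<and> b \<in> B \<and> (a \<notin> S \<or> b \<notin> S) \<and> (0 < k \<longrightarrow> card (S \<inter> ((A - {a}) \<union> (B - {b}))) < k)"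
          by blast
      thus ?thesis by blast
      next
        case F2: False
        have "S \<inter> (A \<union> B) = {}"
        proof (rule ccontr)
          assume "S \<inter> (A \<union> B) \<noteq> {}"
          have AS: "A \<subseteq> S \<and> B \<subseteq> S"
          proof (cases "S \<inter> A \<noteq> {}")
            case True
            hence "B \<subseteq> S" using F2 by blast
            moreover have "B \<noteq> {}" using cB by auto
            ultimately have "A \<subseteq> S" using F1 by blast
            thus ?thesis using \<open>B \<subseteq> S\<close> by simp
          next
            case False
            hence "S \<inter> B \<noteq> {}" using \<open>S \<inter> (A \<union> B) \<noteq> {}\<close> by blast
            hence "A \<subseteq> S" using F1 by blast
            moreover have "A \<noteq> {}" using cA by auto
            ultimately have "B \<subseteq> S" using F2 by blast
            thus ?thesis using \<open>A \<subseteq> S\<close> by simp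
          qed
          hence "S \<inter> (A \<union> B) = A \<union> B" by blast
          hence "card (S \<inter> (A \<union> B)) = card A + card B" using fA fB dj by (simp add: card_Un_disjoint)
          thus False using cA cB cS' by linarith
        qed
        moreover have "A \<noteq> {}" "B \<noteq> {}" using cA cB by auto
        then obtain a b where "a \<in> A" "b \<in> B" by blast
        ultimately have "S \<inter> ((A - {a}) \<union> (B - {b})) = {}" "a \<in> A" "b \<in> B" "a \<notin> S" by blast+
        hence "a \<in> A \<and> b \<in> B \<and> (a \<notin> S \<or> b \<notin> S) \<and> (0 < k \<longrightarrow> card (S \<inter> ((A - {a}) \<union> (B - {b}))) < k)"
          by simp
        thus ?thesis by blast
      qed
    qed
    then obtain a b where ab: "a \<in> A" "b \<in> B" "a \<notin> S \<or> b \<notin> S"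
      and cS2: "0 < k \<longrightarrow> card (S \<inter> ((A - {a}) \<union> (B - {b}))) < k" by blast
    have "finite (A - {a})" "finite (B - {b})" "(A - {a}) \<inter> (B - {b}) = {}"
      "k \<le> card (A - {a})" "k \<le> card (B - {b})"
      using fA fB dj cA cB ab by auto
    then obtain M0 where M0: "M0 \<subseteq> (A - {a}) \<times> (B - {b})" "finite M0" "card M0 = k" "inj_on fst M0"
      "inj_on snd M0" "\<forall>e\<in>M0. fst e \<notin> S \<or> snd e \<notin> S"
      using Suc.IH[rule_format, of "A - {a}" "B - {b}"] cS2 by blast
    have nin: "(a, b) \<notin> M0" "a \<notin> fst ` M0" "b \<notin> snd ` M0" using M0(1) by auto
    show "\<exists>M. M \<subseteq> A \<times> B \<and> finite M \<and> card M = Suc k \<and> inj_on fst M \<and> inj_on snd M \<and>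
          (\<forall>e\<in>M. fst e \<notin> S \<or> snd e \<notin> S)"
    proof (intro exI[of _ "insert (a, b) M0"] conjI)
      show "insert (a, b) M0 \<subseteq> A \<times> B" using M0(1) ab by auto
      show "finite (insert (a, b) M0)" using M0(2) by simp
      show "card (insert (a, b) M0) = Suc k" using M0(2,3) nin(1) by simp
      show "inj_on fst (insert (a, b) M0)" using M0(4) nin(2) by (simp add: inj_on_insert) blast
      show "inj_on snd (insert (a, b) M0)" using M0(5) nin(3) by (simp add: inj_on_insert) blast
      show "\<forall>e\<in>insert (a, b) M0. fst e \<notin> S \<or> snd e \<notin> S" using M0(6) ab by simp
    qed
  qed
qed

lemma card_Diff_ge: "finite B \<Longrightarrow> card A - card B \<le> card (A - B)"
  by (rule diff_card_le_card_Diff)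

definition Fs :: "nat \<Rightarrow> nat \<Rightarrow> (nat \<Rightarrow> nat \<Rightarrow> bool) \<Rightarrow> nat set \<Rightarrow> nat set" where
  "Fs t n G C = {x. x < n \<and> t + 1 \<le> card {y\<in>C. y = x \<or> G x y}}"

definition Es :: "nat \<Rightarrow> nat \<Rightarrow> (nat \<Rightarrow> nat \<Rightarrow> bool) \<Rightarrow> nat set \<Rightarrow> nat set" where
  "Es t n G F = {x. x < n \<and> 2 * t + 1 \<le> card {y\<in>F. y = x \<or> G x y}}"

lemma Eset_eq: "Eset n l alg m Cr A i =
   (case star n (tB n) alg (graph n l m Cr A i) of None \<Rightarrow> {}
    | Some (C, D) \<Rightarrow> (if 2 * tB n + 1 \<le> card (Fs (tB n) n (graph n l m Cr A i) C) \<and>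
        2 * tB n + 1 \<le> card (Es (tB n) n (graph n l m Cr A i) (Fs (tB n) n (graph n l m Cr A i) C))
      then Es (tB n) n (graph n l m Cr A i) (Fs (tB n) n (graph n l m Cr A i) C) else {}))"
  unfolding Eset_def Let_def Fs_def Es_def by simp

lemma Eset_ne:
  assumes "Eset n l alg m Cr A i \<noteq> {}"
  obtains C D where "star n (tB n) alg (graph n l m Cr A i) = Some (C, D)"
    "2 * tB n + 1 \<le> card (Fs (tB n) n (graph n l m Cr A i) C)"
    "2 * tB n + 1 \<le> card (Es (tB n) n (graph n l m Cr A i) (Fs (tB n) n (graph n l m Cr A i) C))"
    "Eset n l alg m Cr A i = Es (tB n) n (graph n l m Cr A i) (Fs (tB n) n (graph n l m Cr A i) C)"
  using assms unfolding Eset_eq by (auto split: option.splits if_splits)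

lemma graph_sym: "graph n l m Cr A i x y = graph n l m Cr A i y x"
  by (auto simp: graph_def)

lemma tB_bound: "1 \<le> n \<Longrightarrow> 3 * tB n + 1 \<le> n"
  unfolding tB_def by linarith

lemma prime_of_props:
  "prime (prime_of n l) \<and> n < prime_of n l \<and> 2 ^ blk n l \<le> prime_of n l \<and>
   prime_of n l \<le> 2 ^ (2 * (blk n l + n) + 3)"
proof -
  obtain q :: nat where q: "prime q" "2 ^ (blk n l + n) < q" "q \<le> 2 ^ (2 * (blk n l + n) + 3)"
    using prime_bound by blast
  have "n < 2 ^ n" by (rule less_exp)
  also have "(2::nat) ^ n \<le> 2 ^ (blk n l + n)" by (intro power_increasing) auto
  finally have nq: "n < q" using q by linarith
  have "(2::nat) ^ blk n l \<le> 2 ^ (blk n l + n)" by (intro power_increasing) auto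
  hence bq: "2 ^ blk n l \<le> q" using q by linarith
  have P: "prime q \<and> n < q \<and> 2 ^ blk n l \<le> q" using q nq bq by simp
  have "prime (prime_of n l) \<and> n < prime_of n l \<and> 2 ^ blk n l \<le> prime_of n l"
    unfolding prime_of_def by (rule LeastI[of _ q]) (rule P)
  moreover have "prime_of n l \<le> q" unfolding prime_of_def by (rule Least_le) (rule P)
  ultimately show ?thesis using q by linarith
qed

lemma msg_blocks_lt_p: "x \<in> set (msg_blocks n l v) \<Longrightarrow> x < prime_of n l"
  using msg_blocks_lt[of x n l v] prime_of_props[of n l] by linarith

lemma data_eq:
  assumes K: "K \<subseteq> {..<n}" "tB n + 1 \<le> card K"
    and eq: "\<forall>z\<in>K. share n l m j z = share n l m k z"
  shows "msg_blocks n l (m j) = msg_blocks n l (m k)"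
proof (rule rs_unique[where n = n and K = K])
  show "prime (prime_of n l)" "n < prime_of n l" using prime_of_props by auto
  show "length (msg_blocks n l (m j)) = length (msg_blocks n l (m k))" by (simp add: length_msg_blocks)
  show "\<forall>x\<in>set (msg_blocks n l (m j)). x < prime_of n l" using msg_blocks_lt_p by blast
  show "\<forall>x\<in>set (msg_blocks n l (m k)). x < prime_of n l" using msg_blocks_lt_p by blast
  show "K \<subseteq> {..<n}" by fact
  show "length (msg_blocks n l (m j)) \<le> card K" using K by (simp add: length_msg_blocks)
  show "\<forall>ja\<in>K. rs_enc (prime_of n l) (msg_blocks n l (m j)) ja = rs_enc (prime_of n l) (msg_blocks n l (m k)) ja"
    using eq by (simp add: share_def)
qed

lemma share_eq: "msg_blocks n l (m j) = msg_blocks n l (m k) \<Longrightarrow> share n l m j = share n l m k"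
  by (simp add: share_def fun_eq_iff)

lemma honest_edge:
  assumes "x \<notin> Cr" "y \<notin> Cr" "x < n" "y < n" "x \<noteq> y"
  shows "graph n l m Cr A i x y \<longleftrightarrow> share n l m x y = share n l m y y \<and> share n l m x x = share n l m y x"
  using assms by (auto simp: graph_def recv2_def vec_def recv1_def)




lemma symbits_le: "p \<le> 2 ^ k \<Longrightarrow> symbits p \<le> k"
  unfolding symbits_def by (rule Least_le)

lemma nb_bound: assumes "1 \<le> n" shows "n * blk n l \<le> 3 * l + n"
proof -
  let ?t = "tB n" let ?b = "blk n l"
  have "?b * (?t + 1) \<le> l + ?t" unfolding blk_def by (rule div_times_less_eq_dividend)
  moreover have "n \<le> 3 * (?t + 1)" using assms unfolding tB_def by presburger
  hence "n * ?b \<le> 3 * (?t + 1) * ?b" by (rule mult_le_mono1)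
  ultimately have "n * ?b \<le> 3 * (l + ?t)" by (simp add: algebra_simps)
  moreover have "3 * ?t \<le> n" using assms unfolding tB_def by presburger
  moreover have "3 * (l + ?t) = 3 * l + 3 * ?t" by simp
  ultimately show ?thesis by linarith
qed

lemma comm_bound:
  assumes n1: "1 \<le> n"
  shows "comm_cost n l alg m Cr A B1 \<le> 23 * (n * l + n ^ 3 + n * B1)"
proof -
  let ?p = "prime_of n l" let ?b = "blk n l"
  define k where "k = symbits ?p"
  have kb: "k \<le> 2 * ?b + 2 * n + 3"
    unfolding k_def using prime_of_props[of n l] by (intro symbits_le) simp
  have trm: "2 * k * (n - 1) + n * (n - 1) + (if Eset n l alg m Cr A i \<noteq> {} then n * (n - 1) else 0)
      + (if proceed n l alg m Cr A then k * (n - 1) else 0) \<le> 3 * k * n + 2 * n * n" for i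
  proof -
    have g: "2 * X + Y + (if P then Y else 0) + (if Q then X else 0) \<le> 3 * X + 2 * Y" for X Y :: nat and P Q
      by simp
    have "2 * k * (n - 1) = 2 * (k * (n - 1))" by simp
    hence "2 * k * (n - 1) + n * (n - 1) + (if Eset n l alg m Cr A i \<noteq> {} then n * (n - 1) else 0)
      + (if proceed n l alg m Cr A then k * (n - 1) else 0) \<le> 3 * (k * (n - 1)) + 2 * (n * (n - 1))"
      using g[of "k * (n - 1)" "n * (n - 1)"] by simp
    moreover have "k * (n - 1) \<le> k * n" "n * (n - 1) \<le> n * n" by simp_all
    ultimately show ?thesis by linarith
  qed
  have "(\<Sum>i\<in>{..<n} - Cr. 2 * k * (n - 1) + n * (n - 1) + (if Eset n l alg m Cr A i \<noteq> {} then n * (n - 1) else 0)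
      + (if proceed n l alg m Cr A then k * (n - 1) else 0)) \<le> card ({..<n} - Cr) * (3 * k * n + 2 * n * n)"
    using sum_bounded_above[of "{..<n} - Cr" "\<lambda>i. 2 * k * (n - 1) + n * (n - 1) + (if Eset n l alg m Cr A i \<noteq> {} then n * (n - 1) else 0)
      + (if proceed n l alg m Cr A then k * (n - 1) else 0)" "3 * k * n + 2 * n * n"] trm by simp
  also have "\<dots> \<le> n * (3 * k * n + 2 * n * n)"
  proof -
    have "card ({..<n} - Cr) \<le> card {..<n}" by (intro card_mono) auto
    thus ?thesis by (intro mult_le_mono1) simp
  qed
  finally have s0: "(\<Sum>i\<in>{..<n} - Cr. 2 * k * (n - 1) + n * (n - 1) + (if Eset n l alg m Cr A i \<noteq> {} then n * (n - 1) else 0)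
      + (if proceed n l alg m Cr A then k * (n - 1) else 0)) \<le> n * (3 * k * n + 2 * n * n)" .
  have eqc: "comm_cost n l alg m Cr A B1 = (\<Sum>i\<in>{..<n} - Cr. 2 * k * (n - 1) + n * (n - 1) + (if Eset n l alg m Cr A i \<noteq> {} then n * (n - 1) else 0)
      + (if proceed n l alg m Cr A then k * (n - 1) else 0)) + n * B1"
    by (simp only: comm_cost_def Let_def k_def)
  have s: "comm_cost n l alg m Cr A B1 \<le> n * (3 * k * n + 2 * n * n) + n * B1"
    using s0 eqc by linarith
  have "n * (3 * k * n) \<le> n * (3 * (2 * ?b + 2 * n + 3) * n)" using kb by simp
  also have "\<dots> = 6 * n * (n * ?b) + 6 * n * n * n + 9 * n * n" by (simp add: algebra_simps)
  also have "\<dots> \<le> 6 * n * (3 * l + n) + 6 * n * n * n + 9 * n * n"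
    using nb_bound[OF n1, of l] by simp
  finally have a: "n * (3 * k * n) \<le> 18 * (n * l) + 15 * (n * n) + 6 * (n * n * n)" by (simp add: algebra_simps)
  have nn: "n * n \<le> n * n * n" using n1 by simp
  have "n * (3 * k * n + 2 * n * n) + n * B1 = n * (3 * k * n) + 2 * (n * n * n) + n * B1"
    by (simp add: algebra_simps)
  also have "\<dots> \<le> 18 * (n * l) + 23 * (n * n * n) + n * B1" using a nn by linarith
  also have "\<dots> \<le> 23 * (n * l + n ^ 3 + n * B1)" by (simp add: algebra_simps power3_eq_cube)
  finally show ?thesis using s by linarith
qed

context
  fixes n l :: nat and alg :: malg and m :: "nat \<Rightarrow> bool list" and Cr :: "nat set" and A :: adv
  assumes n1: "1 \<le> n" and ma: "matching_alg alg" and Crs: "Cr \<subseteq> {..<n}" and Crc: "card Cr \<le> tB n"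
begin
lemma finCr: "finite Cr" using Crs finite_subset by blast

lemma ntt: "3 * tB n + 1 \<le> n" using tB_bound[OF n1] .

lemma Gs: "\<forall>a b. graph n l m Cr A x a b = graph n l m Cr A x b a"
  using graph_sym by blast

lemma card_minus_Cr: "card X - card Cr \<le> card (X - Cr)"
  using finCr by (rule card_Diff_ge)

lemma E_good:
  assumes ne: "Eset n l alg m Cr A x \<noteq> {}"
  shows "Eset n l alg m Cr A x \<subseteq> {..<n}" "2 * tB n + 1 \<le> card (Eset n l alg m Cr A x)"
    "tB n + 1 \<le> card (Eset n l alg m Cr A x - Cr)"
    "\<forall>e\<in>Eset n l alg m Cr A x - Cr. \<forall>e'\<in>Eset n l alg m Cr A x - Cr.
        msg_blocks n l (m e) = msg_blocks n l (m e')"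
proof -
  let ?G = "graph n l m Cr A x"
  obtain C D where st: "star n (tB n) alg ?G = Some (C, D)"
    and cF: "2 * tB n + 1 \<le> card (Fs (tB n) n ?G C)"
    and cE: "2 * tB n + 1 \<le> card (Es (tB n) n ?G (Fs (tB n) n ?G C))"
    and Eq: "Eset n l alg m Cr A x = Es (tB n) n ?G (Fs (tB n) n ?G C)"
    using Eset_ne[OF ne] by blast
  define F where "F = Fs (tB n) n ?G C"
  define E where "E = Es (tB n) n ?G F"
  have Eq': "Eset n l alg m Cr A x = E" using Eq by (simp add: E_def F_def)
  have sC: "C \<subseteq> {..<n}" and sD: "D \<subseteq> {..<n}" and CD: "C \<subseteq> D" and cC: "n - 2 * tB n \<le> card C"
    and cD: "n - tB n \<le> card D" and sp: "\<forall>c\<in>C. \<forall>d\<in>D. c \<noteq> d \<longrightarrow> ?G c d"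
    using star_some[OF ma Gs st] by auto
  have ES: "E \<subseteq> {..<n}" by (auto simp: E_def Es_def)
  have FS: "F \<subseteq> {..<n}" by (auto simp: F_def Fs_def)
  show "Eset n l alg m Cr A x \<subseteq> {..<n}" using ES Eq' by simp
  show "2 * tB n + 1 \<le> card (Eset n l alg m Cr A x)" using cE Eq by simp
  have cEc: "tB n + 1 \<le> card (E - Cr)" using cE card_minus_Cr[of E] Crc by (simp add: E_def F_def)
  thus "tB n + 1 \<le> card (Eset n l alg m Cr A x - Cr)" using Eq' by simp
  have cKD: "tB n + 1 \<le> card (D - Cr)" using cD card_minus_Cr[of D] Crc ntt by linarith
  have hC1: "share n l m a z = share n l m z z" if "a \<in> C - Cr" "z \<in> D - Cr" for a z
  proof (cases "a = z")
    case False
    have "?G a z" using sp that False by blast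
    thus ?thesis using honest_edge[where x=a and y=z and Cr=Cr and n=n and l=l and m=m and A=A and i=x] that sC sD False by auto
  qed simp
  have hC2: "msg_blocks n l (m a) = msg_blocks n l (m a')" if "a \<in> C - Cr" "a' \<in> C - Cr" for a a'
    by (rule data_eq[of "D - Cr"]) (use sD cKD hC1 that in auto)
  have hF: "\<exists>a\<in>C - Cr. share n l m f f = share n l m a f" if f: "f \<in> F - Cr" for f
  proof -
    let ?Nf = "{y\<in>C. y = f \<or> ?G f y}"
    have "tB n + 1 \<le> card ?Nf" using f by (simp add: F_def Fs_def)
    moreover have "finite C" using sC finite_subset by blast
    hence "finite ?Nf" by simp
    ultimately have "card (?Nf - Cr) \<ge> 1" using card_minus_Cr[of ?Nf] Crc by linarith
    then obtain y where y: "y \<in> ?Nf - Cr" by (metis card.empty ex_in_conv not_one_le_zero)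
    show ?thesis
    proof (cases "y = f")
      case True thus ?thesis using y by auto
    next
      case False
      hence "?G f y" using y by auto
      hence "share n l m f f = share n l m y f"
        using honest_edge[where x=f and y=y and Cr=Cr and n=n and l=l and m=m and A=A and i=x] y f FS sC False by auto
      thus ?thesis using y by auto
    qed
  qed
  have hE: "msg_blocks n l (m e) = msg_blocks n l (m a)" if e: "e \<in> E - Cr" and a: "a \<in> C - Cr" for e a
  proof -
    let ?Ne = "{y\<in>F. y = e \<or> ?G e y} - Cr"
    have "2 * tB n + 1 \<le> card {y\<in>F. y = e \<or> ?G e y}" using e by (simp add: E_def Es_def)
    hence cNe: "tB n + 1 \<le> card ?Ne" using card_minus_Cr[of "{y\<in>F. y = e \<or> ?G e y}"] Crc by linarith
    have "share n l m e y = share n l m a y" if y: "y \<in> ?Ne" for y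
    proof -
      have "share n l m e y = share n l m y y"
      proof (cases "y = e")
        case False
        hence "?G e y" using y by auto
        thus ?thesis using honest_edge[where x=e and y=y and Cr=Cr and n=n and l=l and m=m and A=A and i=x] y e FS ES False by auto
      qed simp
      moreover obtain a' where a': "a' \<in> C - Cr" "share n l m y y = share n l m a' y" using hF y by blast
      moreover have "share n l m a' = share n l m a" using hC2[OF a'(1) a] by (rule share_eq)
      ultimately show ?thesis by simp
    qed
    thus ?thesis by (intro data_eq[of ?Ne]) (use FS cNe in auto)
  qed
  show "\<forall>e\<in>Eset n l alg m Cr A x - Cr. \<forall>e'\<in>Eset n l alg m Cr A x - Cr.
        msg_blocks n l (m e) = msg_blocks n l (m e')"
  proof (intro ballI)
    fix e e' assume e: "e \<in> Eset n l alg m Cr A x - Cr" and e': "e' \<in> Eset n l alg m Cr A x - Cr"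
    let ?Ne = "{y\<in>F. y = e \<or> ?G e y} - Cr"
    have "2 * tB n + 1 \<le> card {y\<in>F. y = e \<or> ?G e y}" using e Eq' by (simp add: E_def Es_def)
    hence "1 \<le> card ?Ne" using card_minus_Cr[of "{y\<in>F. y = e \<or> ?G e y}"] Crc by linarith
    then obtain y where "y \<in> ?Ne" by (metis card.empty ex_in_conv not_one_le_zero)
    hence "y \<in> F - Cr" by auto
    then obtain a where a: "a \<in> C - Cr" using hF by blast
    show "msg_blocks n l (m e) = msg_blocks n l (m e')" using hE[of e a] hE[of e' a] a e e' Eq' by simp
  qed
qed



lemma disj_pairs:
  assumes "M \<subseteq> AA \<times> BB" "AA \<inter> BB = {}" "inj_on fst M" "inj_on snd M" "p \<in> M" "q \<in> M" "p \<noteq> q"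
  shows "{fst p, snd p} \<inter> {fst q, snd q} = {}"
proof -
  have 1: "fst p \<noteq> fst q" using inj_on_contraD[OF assms(3,7,5,6)] .
  have 2: "snd p \<noteq> snd q" using inj_on_contraD[OF assms(4,7,5,6)] .
  have "p \<in> AA \<times> BB" "q \<in> AA \<times> BB" using assms(1,5,6) by auto
  hence "fst p \<in> AA" "snd p \<in> BB" "fst q \<in> AA" "snd q \<in> BB" by auto
  hence 3: "fst p \<noteq> snd q" "snd p \<noteq> fst q" using assms(2) by auto
  show ?thesis using 1 2 3 by auto
qed

lemma cross:
  assumes ne1: "Eset n l alg m Cr A x \<noteq> {}" and ne2: "Eset n l alg m Cr A x' \<noteq> {}"
    and e: "e \<in> Eset n l alg m Cr A x - Cr" and e': "e' \<in> Eset n l alg m Cr A x' - Cr"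
  shows "msg_blocks n l (m e) = msg_blocks n l (m e')"
proof (rule ccontr)
  assume ne: "msg_blocks n l (m e) \<noteq> msg_blocks n l (m e')"
  let ?A = "Eset n l alg m Cr A x - Cr" and ?B = "Eset n l alg m Cr A x' - Cr"
  let ?G = "graph n l m Cr A x"
  note g1 = E_good[OF ne1] and g2 = E_good[OF ne2]
  have hA: "msg_blocks n l (m a) = msg_blocks n l (m e)" if "a \<in> ?A" for a using g1(4) that e by blast
  have hB: "msg_blocks n l (m b) = msg_blocks n l (m e')" if "b \<in> ?B" for b using g2(4) that e' by blast
  define S where "S = {z. z < n \<and> share n l m e z = share n l m e' z}"
  have fS: "finite S" by (simp add: S_def)
  have cS: "card S \<le> tB n"
  proof (rule ccontr)
    assume "\<not> card S \<le> tB n"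
    hence "msg_blocks n l (m e) = msg_blocks n l (m e')" by (intro data_eq[of S]) (auto simp: S_def)
    thus False using ne by simp
  qed
  have dj: "?A \<inter> ?B = {}"
  proof (rule ccontr)
    assume "?A \<inter> ?B \<noteq> {}"
    then obtain c where c: "c \<in> ?A" "c \<in> ?B" by blast
    show False using hA[OF c(1)] hB[OF c(2)] ne by simp
  qed
  have "?A \<subseteq> {..<n}" "?B \<subseteq> {..<n}" using g1(1) g2(1) by auto
  hence fA: "finite ?A" "finite ?B" by (auto intro: finite_subset)
  have "card (S \<inter> (?A \<union> ?B)) \<le> card S" using fS by (intro card_mono) auto
  hence cS2: "card (S \<inter> (?A \<union> ?B)) < tB n + 1" using cS by linarith
  have ex: "\<exists>M. M \<subseteq> ?A \<times> ?B \<and> finite M \<and> card M = tB n + 1 \<and> inj_on fst M \<and> inj_on snd M \<and>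
      (\<forall>p\<in>M. fst p \<notin> S \<or> snd p \<notin> S)"
  proof (rule build_matching[OF fS, rule_format])
    show "finite ?A" "finite ?B" by (fact fA(1), fact fA(2))
    show "?A \<inter> ?B = {}" by (fact dj)
    show "tB n + 1 \<le> card ?A" by (fact g1(3))
    show "tB n + 1 \<le> card ?B" by (fact g2(3))
    show "card (S \<inter> (?A \<union> ?B)) < tB n + 1" by (fact cS2)
  qed
  then obtain M where M: "M \<subseteq> ?A \<times> ?B" "finite M" "card M = tB n + 1" "inj_on fst M" "inj_on snd M"
    "\<forall>p\<in>M. fst p \<notin> S \<or> snd p \<notin> S" by blast
  define AA where "AA = ?A"
  define BB where "BB = ?B"
  have MAB: "M \<subseteq> AA \<times> BB" using M(1) by (simp add: AA_def BB_def)
  have djAB: "AA \<inter> BB = {}" using dj by (simp add: AA_def BB_def)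
  have AAn: "AA \<subseteq> {..<n}" "BB \<subseteq> {..<n}" using g1(1) g2(1) by (auto simp: AA_def BB_def)
  have AAC: "AA \<inter> Cr = {}" "BB \<inter> Cr = {}" by (auto simp: AA_def BB_def)
  have hA': "share n l m a = share n l m e" if "a \<in> AA" for a
  proof -
    have "msg_blocks n l (m a) = msg_blocks n l (m e)" using hA[of a] that by (simp add: AA_def)
    thus ?thesis by (rule share_eq)
  qed
  have hB': "share n l m b = share n l m e'" if "b \<in> BB" for b
  proof -
    have "msg_blocks n l (m b) = msg_blocks n l (m e')" using hB[of b] that by (simp add: BB_def)
    thus ?thesis by (rule share_eq)
  qed
  have "is_matching n (Hg n ?G) M"
    unfolding is_matching_def
  proof (intro conjI ballI impI)
    fix p assume p: "p \<in> M"
    obtain a b where ab: "p = (a, b)" by (cases p)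
    have "(a, b) \<in> AA \<times> BB" using MAB p ab by blast
    hence a: "a \<in> AA" and b: "b \<in> BB" by simp_all
    have an: "a < n" "b < n" using a b AAn by blast+
    have abne: "a \<noteq> b" using a b djAB by blast
    have acr: "a \<notin> Cr" "b \<notin> Cr" using a b AAC by blast+
    have "\<not> ?G a b"
    proof
      assume "?G a b"
      hence h: "share n l m a b = share n l m b b \<and> share n l m a a = share n l m b a"
        using honest_edge[where x=a and y=b and Cr=Cr and n=n and l=l and m=m and A=A and i=x] acr an abne by blast
      hence "share n l m e b = share n l m e' b" "share n l m e a = share n l m e' a"
        using hA'[OF a] hB'[OF b] by simp_all
      hence "a \<in> S" "b \<in> S" using an by (simp_all add: S_def)
      thus False using M(6) p ab by force
    qed
    thus "case p of (a, b) \<Rightarrow> a < n \<and> b < n \<and> a \<noteq> b \<and> Hg n ?G a b"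
      using an abne ab by (simp add: Hg_def)
  next
    fix p q assume p: "p \<in> M" and q: "q \<in> M" and pq: "p \<noteq> q"
    show "{fst p, snd p} \<inter> {fst q, snd q} = {}" by (rule disj_pairs[OF MAB djAB M(4) M(5) p q pq])
  qed
  hence "star n (tB n) alg ?G = None"
    by (rule star_none[OF ma _ M(2)]) (use M(3) ntt in auto)
  hence "Eset n l alg m Cr A x = {}" by (simp add: Eset_eq)
  thus False using ne1 by simp
qed


lemma valid_E:
  assumes hv: "\<forall>i<n. i \<notin> Cr \<longrightarrow> m i = v"
  shows "Eset n l alg m Cr A x \<noteq> {}"
proof -
  let ?G = "graph n l m Cr A x"
  have hon: "\<forall>a b. a < n \<longrightarrow> b < n \<longrightarrow> a \<noteq> b \<longrightarrow> a \<notin> Cr \<longrightarrow> b \<notin> Cr \<longrightarrow> ?G a b"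
  proof (intro allI impI)
    fix a b assume "a < n" "b < n" "a \<noteq> b" "a \<notin> Cr" "b \<notin> Cr"
    moreover hence "m a = m b" using hv by simp
    hence "share n l m a = share n l m b" by (simp add: share_def fun_eq_iff)
    ultimately show "?G a b"
      using honest_edge[where x=a and y=b and Cr=Cr and n=n and l=l and m=m and A=A and i=x] by simp
  qed
  have sv: "star n (tB n) alg ?G = Some (starC n alg ?G, starD n alg ?G)"
    and cC: "n - 2 * tB n \<le> card (starC n alg ?G - Cr)"
    using star_valid[OF ma Gs Crs Crc hon] by auto
  define C where "C = starC n alg ?G"
  have sC: "C \<subseteq> {..<n}" using starC_sub[of n alg ?G] by (auto simp: C_def)
  have finC: "finite C" using sC finite_subset by blast
  define F where "F = Fs (tB n) n ?G C"
  define E where "E = Es (tB n) n ?G F"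
  have honF: "{..<n} - Cr \<subseteq> F"
  proof
    fix h assume h: "h \<in> {..<n} - Cr"
    have "C - Cr \<subseteq> {y\<in>C. y = h \<or> ?G h y}" using hon h sC by auto
    hence "card (C - Cr) \<le> card {y\<in>C. y = h \<or> ?G h y}" using finC by (intro card_mono) auto
    hence "tB n + 1 \<le> card {y\<in>C. y = h \<or> ?G h y}" using cC[folded C_def] ntt by linarith
    thus "h \<in> F" using h by (simp add: F_def Fs_def)
  qed
  have cH: "card ({..<n} - Cr) = n - card Cr" using Crs finCr by (simp add: card_Diff_subset)
  have FS: "F \<subseteq> {..<n}" by (auto simp: F_def Fs_def)
  have cF: "2 * tB n + 1 \<le> card F"
  proof -
    have "card ({..<n} - Cr) \<le> card F" using honF FS by (intro card_mono) (auto intro: finite_subset)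
    thus ?thesis using cH Crc ntt by linarith
  qed
  have honE: "{..<n} - Cr \<subseteq> E"
  proof
    fix h assume h: "h \<in> {..<n} - Cr"
    have "{..<n} - Cr \<subseteq> {y\<in>F. y = h \<or> ?G h y}" using hon h honF by auto
    moreover have "finite F" using FS finite_subset by blast
    ultimately have "card ({..<n} - Cr) \<le> card {y\<in>F. y = h \<or> ?G h y}" by (intro card_mono) auto
    hence "2 * tB n + 1 \<le> card {y\<in>F. y = h \<or> ?G h y}" using cH Crc ntt by linarith
    thus "h \<in> E" using h by (simp add: E_def Es_def)
  qed
  have ES: "E \<subseteq> {..<n}" by (auto simp: E_def Es_def)
  have cE: "2 * tB n + 1 \<le> card E"
  proof -
    have "card ({..<n} - Cr) \<le> card E" using honE ES by (intro card_mono) (auto intro: finite_subset)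
    thus ?thesis using cH Crc ntt by linarith
  qed
  have "Eset n l alg m Cr A x = E"
    using sv cF cE by (simp add: Eset_eq C_def[symmetric] F_def[symmetric] E_def[symmetric])
  moreover have "E \<noteq> {}" using cE by auto
  ultimately show ?thesis by simp
qed



lemma proceed_common:
  assumes pr: "proceed n l alg m Cr A"
  shows "\<exists>e0 ds0. e0 < n \<and> e0 \<notin> Cr \<and> ds0 = msg_blocks n l (m e0) \<and>
    (\<forall>x e. x \<notin> Cr \<longrightarrow> Eset n l alg m Cr A x \<noteq> {} \<longrightarrow> e \<in> Eset n l alg m Cr A x - Cr \<longrightarrow>
        msg_blocks n l (m e) = ds0)"
proof -
  let ?bs = "{x. x < n \<and> bcast n l alg m Cr A x}"
  have cb: "2 * tB n + 1 \<le> card ?bs" using pr by (simp add: proceed_def)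
  hence "1 \<le> card (?bs - Cr)" using card_minus_Cr[of ?bs] Crc by linarith
  then obtain x0 where x0: "x0 \<in> ?bs - Cr" by (metis card.empty ex_in_conv not_one_le_zero)
  hence ne0: "Eset n l alg m Cr A x0 \<noteq> {}" by (simp add: bcast_def)
  have "1 \<le> card (Eset n l alg m Cr A x0 - Cr)" using E_good(3)[OF ne0] by simp
  then obtain e0 where e0: "e0 \<in> Eset n l alg m Cr A x0 - Cr" by (metis card.empty ex_in_conv not_one_le_zero)
  have e0n: "e0 < n" using E_good(1)[OF ne0] e0 by auto
  have "\<forall>x e. x \<notin> Cr \<longrightarrow> Eset n l alg m Cr A x \<noteq> {} \<longrightarrow> e \<in> Eset n l alg m Cr A x - Cr \<longrightarrow>
        msg_blocks n l (m e) = msg_blocks n l (m e0)"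
    using cross[OF _ ne0 _ e0] by blast
  thus ?thesis using e0n e0 by blast
qed

lemma half_lemma: "2 * t + 1 \<le> (c::nat) \<Longrightarrow> (c + 2) div 2 \<le> c - t" by presburger

lemma half_lemma2: "c < 2 * ((c::nat) + 2) div 2" by presburger

lemma majof_good:
  assumes x: "x \<notin> Cr" and ne: "Eset n l alg m Cr A x \<noteq> {}"
    and com: "\<forall>e\<in>Eset n l alg m Cr A x - Cr. msg_blocks n l (m e) = ds0"
  shows "majof n l m Cr A i (Eset n l alg m Cr A x) = Some (rs_enc (prime_of n l) ds0 i)"
proof -
  let ?E = "Eset n l alg m Cr A x"
  let ?w = "rs_enc (prime_of n l) ds0 i"
  let ?W = "\<lambda>v. {j\<in>?E. snd (recv1 n l m Cr A i j) = v}"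
  let ?th = "(card ?E + 2) div 2"
  have ES: "?E \<subseteq> {..<n}" and cE: "2 * tB n + 1 \<le> card ?E" using E_good[OF ne] by auto
  have finE: "finite ?E" using ES finite_subset by blast
  have sub: "?E - Cr \<subseteq> ?W ?w"
  proof
    fix j assume j: "j \<in> ?E - Cr"
    have "snd (recv1 n l m Cr A i j) = share n l m j i" using j by (simp add: recv1_def)
    also have "\<dots> = ?w" using com j by (simp add: share_def)
    finally show "j \<in> ?W ?w" using j by simp
  qed
  have "card (?E - Cr) \<le> card (?W ?w)" using sub finE by (intro card_mono) auto
  hence thw: "?th \<le> card (?W ?w)" using card_minus_Cr[of ?E] Crc half_lemma[OF cE] by linarith
  hence ex: "\<exists>v. ?th \<le> card (?W v)" by blast
  let ?v0 = "SOME v. ?th \<le> card (?W v)"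
  have v0: "?th \<le> card (?W ?v0)" using someI_ex[OF ex] .
  have "?v0 = ?w"
  proof (rule ccontr)
    assume ne: "?v0 \<noteq> ?w"
    have "?W ?v0 \<inter> ?W ?w = {}" using ne by auto
    hence "card (?W ?v0 \<union> ?W ?w) = card (?W ?v0) + card (?W ?w)" using finE by (intro card_Un_disjoint) auto
    moreover have "card (?W ?v0 \<union> ?W ?w) \<le> card ?E" using finE by (intro card_mono) auto
    ultimately show False using v0 thw half_lemma2[of "card ?E"] by linarith
  qed
  thus ?thesis using ex unfolding majof_def by simp
qed

lemma majval_good:
  assumes pr: "proceed n l alg m Cr A"
    and com: "\<And>x e. x \<notin> Cr \<Longrightarrow> Eset n l alg m Cr A x \<noteq> {} \<Longrightarrow> e \<in> Eset n l alg m Cr A x - Cr \<Longrightarrow>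
        msg_blocks n l (m e) = dd"
  shows "majval n l alg m Cr A j = rs_enc (prime_of n l) dd j"
proof -
  let ?bs = "{x. x < n \<and> bcast n l alg m Cr A x}"
  let ?w = "rs_enc (prime_of n l) dd j"
  let ?P = "\<lambda>v. \<exists>E'. E' \<subseteq> ?bs \<and> tB n + 1 \<le> card E' \<and>
        (\<forall>x\<in>E'. majof n l m Cr A j (recvE n l alg m Cr A j x) = Some v)"
  have good: "majof n l m Cr A j (recvE n l alg m Cr A j x) = Some ?w" if "x \<in> ?bs - Cr" for x
  proof -
    have "x \<notin> Cr" "Eset n l alg m Cr A x \<noteq> {}" using that by (auto simp: bcast_def)
    moreover have "\<forall>e\<in>Eset n l alg m Cr A x - Cr. msg_blocks n l (m e) = dd"
      using com[OF calculation(1) calculation(2)] by blast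
    ultimately show ?thesis using majof_good[of x dd j] by (simp add: recvE_def)
  qed
  have cb: "2 * tB n + 1 \<le> card ?bs" using pr by (simp add: proceed_def)
  have "?P ?w"
  proof (intro exI conjI)
    show "?bs - Cr \<subseteq> ?bs" by blast
    show "tB n + 1 \<le> card (?bs - Cr)" using cb card_minus_Cr[of ?bs] Crc by linarith
    show "\<forall>x\<in>?bs - Cr. majof n l m Cr A j (recvE n l alg m Cr A j x) = Some ?w" using good by blast
  qed
  define v0 where "v0 = (SOME v. ?P v)"
  have P0: "?P v0" unfolding v0_def by (rule someI[of ?P ?w]) fact
  then obtain E' where E'1: "E' \<subseteq> ?bs" and E'2: "tB n + 1 \<le> card E'"
    and E'3: "\<forall>x\<in>E'. majof n l m Cr A j (recvE n l alg m Cr A j x) = Some v0" by blast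
  have "1 \<le> card (E' - Cr)" using E'2 card_minus_Cr[of E'] Crc by linarith
  then obtain x where x: "x \<in> E' - Cr" by (metis card.empty ex_in_conv not_one_le_zero)
  have "majof n l m Cr A j (recvE n l alg m Cr A j x) = Some v0" using E'3 x by blast
  moreover have "x \<in> ?bs - Cr" using E'1 x by blast
  hence "majof n l m Cr A j (recvE n l alg m Cr A j x) = Some ?w" by (rule good)
  ultimately have "v0 = ?w" by simp
  hence "(SOME v. ?P v) = ?w" by (simp add: v0_def)
  thus ?thesis by (simp add: majval_def)
qed

lemma output_good:
  assumes pr: "proceed n l alg m Cr A" and e0: "e0 \<notin> Cr" "ds0 = msg_blocks n l (m e0)"
    and com: "\<And>x e. x \<notin> Cr \<Longrightarrow> Eset n l alg m Cr A x \<noteq> {} \<Longrightarrow> e \<in> Eset n l alg m Cr A x - Cr \<Longrightarrow>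
        msg_blocks n l (m e) = ds0"
  shows "party_output n l alg m' m Cr A i = unblocks n l ds0"
proof -
  let ?p = "prime_of n l"
  let ?w = "recv6 n l alg m Cr A i"
  have mv: "majval n l alg m Cr A j = rs_enc ?p ds0 j" for j
    using majval_good[where dd = ds0 and j = j, OF pr com] .
  have wj: "?w j = rs_enc ?p ds0 j" if "j \<notin> Cr" for j
    using that mv by (simp add: recv6_def)
  let ?Q = "\<lambda>ds. length ds = tB n + 1 \<and> (\<forall>x\<in>set ds. x < ?p) \<and>
      card {j. j < n \<and> rs_enc ?p ds j \<noteq> ?w j} \<le> tB n"
  have len0: "length ds0 = tB n + 1" using e0 by (simp add: length_msg_blocks)
  have b0: "\<forall>x\<in>set ds0. x < ?p" using e0 msg_blocks_lt_p by blast
  have "?Q ds0"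
  proof (intro conjI len0 b0)
    have "{j. j < n \<and> rs_enc ?p ds0 j \<noteq> ?w j} \<subseteq> Cr"
    proof
      fix j assume j: "j \<in> {j. j < n \<and> rs_enc ?p ds0 j \<noteq> ?w j}"
      show "j \<in> Cr"
      proof (rule ccontr)
        assume "j \<notin> Cr"
        thus False using wj[OF \<open>j \<notin> Cr\<close>] j by simp
      qed
    qed
    hence "card {j. j < n \<and> rs_enc ?p ds0 j \<noteq> ?w j} \<le> card Cr" using finCr by (rule card_mono[rotated])
    thus "card {j. j < n \<and> rs_enc ?p ds0 j \<noteq> ?w j} \<le> tB n" using Crc by linarith
  qed
  hence Q1: "?Q (SOME ds. ?Q ds)" by (rule someI)
  define ds1 where "ds1 = (SOME ds. ?Q ds)"
  have Q1': "?Q ds1" using Q1 by (simp add: ds1_def)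
  define K where "K = ({..<n} - Cr) - {j. j < n \<and> rs_enc ?p ds1 j \<noteq> ?w j}"
  have cH: "card ({..<n} - Cr) = n - card Cr" using Crs finCr by (simp add: card_Diff_subset)
  have "card ({..<n} - Cr) - card {j. j < n \<and> rs_enc ?p ds1 j \<noteq> ?w j} \<le> card K"
    unfolding K_def by (rule diff_card_le_card_Diff) simp
  hence cK: "tB n + 1 \<le> card K" using cH Crc Q1' ntt by linarith
  have "ds1 = ds0"
  proof (rule rs_unique[where n = n and K = K])
    show "prime ?p" "n < ?p" using prime_of_props by auto
    show "length ds1 = length ds0" using Q1' len0 by simp
    show "\<forall>x\<in>set ds1. x < ?p" using Q1' by blast
    show "\<forall>x\<in>set ds0. x < ?p" by (fact b0)
    show "K \<subseteq> {..<n}" by (auto simp: K_def)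
    show "length ds1 \<le> card K" using Q1' cK by simp
    show "\<forall>j\<in>K. rs_enc ?p ds1 j = rs_enc ?p ds0 j" using wj by (auto simp: K_def)
  qed
  hence "rs_dec n (tB n) ?p ?w = ds0" by (simp add: rs_dec_def ds1_def)
  thus ?thesis using pr by (simp add: party_output_def)
qed

theorem correctness:
  assumes len: "\<forall>i<n. i \<notin> Cr \<longrightarrow> length (m i) = l" and lm': "length m' = l"
  shows "(\<forall>i<n. \<forall>j<n. i \<notin> Cr \<and> j \<notin> Cr \<longrightarrow>
                  party_output n l alg m' m Cr A i = party_output n l alg m' m Cr A j) \<and>
         (\<forall>v. (\<forall>i<n. i \<notin> Cr \<longrightarrow> m i = v) \<longrightarrow>
                  (\<forall>i<n. i \<notin> Cr \<longrightarrow> party_output n l alg m' m Cr A i = v))"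
proof (intro conjI allI impI)
  fix i j assume "i < n" "j < n" "i \<notin> Cr \<and> j \<notin> Cr"
  show "party_output n l alg m' m Cr A i = party_output n l alg m' m Cr A j"
  proof (cases "proceed n l alg m Cr A")
    case True
    obtain e0 ds0 where H0: "e0 < n" "e0 \<notin> Cr" "ds0 = msg_blocks n l (m e0)"
      "\<forall>x e. x \<notin> Cr \<longrightarrow> Eset n l alg m Cr A x \<noteq> {} \<longrightarrow> e \<in> Eset n l alg m Cr A x - Cr \<longrightarrow>
        msg_blocks n l (m e) = ds0" using proceed_common[OF True] by blast
    have H: "e0 \<notin> Cr" "ds0 = msg_blocks n l (m e0)"
      "\<And>x e. x \<notin> Cr \<Longrightarrow> Eset n l alg m Cr A x \<noteq> {} \<Longrightarrow> e \<in> Eset n l alg m Cr A x - Cr \<Longrightarrow>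
        msg_blocks n l (m e) = ds0" using H0 by blast+
    have "party_output n l alg m' m Cr A i = unblocks n l ds0" by (rule output_good[OF True H(1) H(2) H(3)])
    moreover have "party_output n l alg m' m Cr A j = unblocks n l ds0" by (rule output_good[OF True H(1) H(2) H(3)])
    ultimately show ?thesis by simp
  next
    case False thus ?thesis by (simp add: party_output_def)
  qed
next
  fix v i assume hv: "\<forall>i<n. i \<notin> Cr \<longrightarrow> m i = v" and i: "i < n" "i \<notin> Cr"
  have pr: "proceed n l alg m Cr A"
  proof -
    let ?bs = "{x. x < n \<and> bcast n l alg m Cr A x}"
    have "{..<n} - Cr \<subseteq> ?bs" using valid_E[OF hv] by (auto simp: bcast_def)
    hence "card ({..<n} - Cr) \<le> card ?bs" by (intro card_mono) auto
    moreover have "card ({..<n} - Cr) = n - card Cr" using Crs finCr by (simp add: card_Diff_subset)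
    ultimately show ?thesis using Crc ntt by (simp add: proceed_def)
  qed
  obtain e0 ds0 where e0: "e0 < n" "e0 \<notin> Cr" "ds0 = msg_blocks n l (m e0)"
    and com0: "\<forall>x e. x \<notin> Cr \<longrightarrow> Eset n l alg m Cr A x \<noteq> {} \<longrightarrow> e \<in> Eset n l alg m Cr A x - Cr \<longrightarrow>
        msg_blocks n l (m e) = ds0" using proceed_common[OF pr] by blast
  have com: "\<And>x e. x \<notin> Cr \<Longrightarrow> Eset n l alg m Cr A x \<noteq> {} \<Longrightarrow> e \<in> Eset n l alg m Cr A x - Cr \<Longrightarrow>
        msg_blocks n l (m e) = ds0" using com0 by blast
  have "party_output n l alg m' m Cr A i = unblocks n l ds0" by (rule output_good[OF pr e0(2,3) com])
  also have "ds0 = msg_blocks n l v" using e0 hv by simp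
  also have "unblocks n l (msg_blocks n l v) = v" using len hv e0 by (intro unblocks_msg_blocks) auto
  finally show "party_output n l alg m' m Cr A i = v" .
qed

end

theorem mainTheorem10:
  shows "(\<forall>n l alg m' m Cr A.
            1 \<le> n \<and> matching_alg alg \<and> length m' = l \<and>
            Cr \<subseteq> {..<n} \<and> card Cr \<le> tB n \<and>
            (\<forall>i<n. i \<notin> Cr \<longrightarrow> length (m i) = l) \<longrightarrow>
              (\<forall>i<n. \<forall>j<n. i \<notin> Cr \<and> j \<notin> Cr \<longrightarrow>
                  party_output n l alg m' m Cr A i = party_output n l alg m' m Cr A j) \<and>
              (\<forall>v. (\<forall>i<n. i \<notin> Cr \<longrightarrow> m i = v) \<longrightarrow>
                  (\<forall>i<n. i \<notin> Cr \<longrightarrow> party_output n l alg m' m Cr A i = v)))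
       \<and> (\<exists>C::nat. \<forall>n l alg m Cr A B1.
            1 \<le> n \<and> matching_alg alg \<and>
            Cr \<subseteq> {..<n} \<and> card Cr \<le> tB n \<and>
            (\<forall>i<n. i \<notin> Cr \<longrightarrow> length (m i) = l) \<longrightarrow>
              comm_cost n l alg m Cr A B1 \<le> C * (n * l + n ^ 3 + n * B1))"
proof (rule conjI)
  show "\<forall>n l alg (m'::bool list) m Cr A.
            1 \<le> n \<and> matching_alg alg \<and> length m' = l \<and>
            Cr \<subseteq> {..<n} \<and> card Cr \<le> tB n \<and>
            (\<forall>i<n. i \<notin> Cr \<longrightarrow> length (m i) = l) \<longrightarrow>
              (\<forall>i<n. \<forall>j<n. i \<notin> Cr \<and> j \<notin> Cr \<longrightarrow>
                  party_output n l alg m' m Cr A i = party_output n l alg m' m Cr A j) \<and>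
              (\<forall>v. (\<forall>i<n. i \<notin> Cr \<longrightarrow> m i = v) \<longrightarrow>
                  (\<forall>i<n. i \<notin> Cr \<longrightarrow> party_output n l alg m' m Cr A i = v))"
  proof (intro allI impI)
    fix n l :: nat and alg :: malg and m' :: "bool list" and m :: "nat \<Rightarrow> bool list" and Cr :: "nat set" and A :: adv
    assume H: "1 \<le> n \<and> matching_alg alg \<and> length m' = l \<and>
            Cr \<subseteq> {..<n} \<and> card Cr \<le> tB n \<and>
            (\<forall>i<n. i \<notin> Cr \<longrightarrow> length (m i) = l)"
    hence h1: "1 \<le> n" "matching_alg alg" "Cr \<subseteq> {..<n}" "card Cr \<le> tB n"
      "\<forall>i<n. i \<notin> Cr \<longrightarrow> length (m i) = l" "length m' = l" by auto
    show "(\<forall>i<n. \<forall>j<n. i \<notin> Cr \<and> j \<notin> Cr \<longrightarrow>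
                  party_output n l alg m' m Cr A i = party_output n l alg m' m Cr A j) \<and>
              (\<forall>v. (\<forall>i<n. i \<notin> Cr \<longrightarrow> m i = v) \<longrightarrow>
                  (\<forall>i<n. i \<notin> Cr \<longrightarrow> party_output n l alg m' m Cr A i = v))"
      by (rule correctness[OF h1])
  qed
next
  show "\<exists>C::nat. \<forall>n l alg m Cr A B1.
            1 \<le> n \<and> matching_alg alg \<and>
            Cr \<subseteq> {..<n} \<and> card Cr \<le> tB n \<and>
            (\<forall>i<n. i \<notin> Cr \<longrightarrow> length (m i) = l) \<longrightarrow>
              comm_cost n l alg m Cr A B1 \<le> C * (n * l + n ^ 3 + n * B1)"
    by (intro exI[of _ 23] allI impI) (rule comm_bound, simp)
qed

end
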